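(* Let $E$ be a connected graded Frobenius algebra with Nakayama automorphism $\mu_E$, and let $K$ be a Hopf algebra with antipode $S$ such that $E$ is a left $K$-comodule algebra with grading-preserving coaction $\rho$ whose restriction to $E_1$ is inner-faithful. Let ${\sf D}\in K$ be the homological codeterminant. Choose a basis $\{a_i\}_{i=1}^n$ of $E_1$, let $\alpha=(\alpha_{ij})$ be given by $\mu_E(a_i)=\sum_j\alpha_{ij}a_j$, and write $\rho(a_i)=\sum_s y_{is}\otimes a_s$, $\mathbb Y=(y_{ij})$. Then the assignment $\mathbb Y\mapsto\alpha\mathbb Y\alpha^{-1}$ (i.e. $y_{ij}\mapsto(\alpha\mathbb Y\alpha^{-1})_{ij}$) extends to a unique Hopf algebra endomorphism $\eta_{\mu_E}$ of $K$, which satisfies $\eta_{\mu_E}(y_{ij})={\sf D}^{-1}S^2(y_{ij}){\sf D}$ for all $i,j$ and in fact $\eta_{\mu_E}=\eta_{\sf D}\circ S^2$ on $K$, where $\eta_{\sf D}(a)={\sf D}^{-1}a{\sf D}$. Consequently $S$ is surjective (and $\eta_{\mu_E}$ does not depend on the choice of basis).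
   Context: A connected graded algebra $E$ is Frobenius if it is finite dimensional with a nondegenerate associative graded bilinear form $\langle-,-\rangle$; its (classical) Nakayama automorphism $\mu_E$ is the graded automorphism with $\langle a,b\rangle=\langle b,\mu_E(a)\rangle$. The top nonzero degree $E_l$ is one-dimensional, spanned by $\mathfrak e$; the homological codeterminant is the grouplike ${\sf D}\in K$ with $\rho(\mathfrak e)={\sf D}\otimes\mathfrak e$. The left coaction on $E_1$ is inner-faithful if $\rho(E_1)\not\subseteq K'\otimes E_1$ for every proper Hopf subalgebra $K'\subsetneq K$. *)

theory Defs
  imports Complex_Main "HOL-Library.Function_Algebras"
begin

text \<open>An element of V \<otimes> W is represented by a list of pairs (a formal sum of
pure tensors; scalars are absorbed into the first factor).  Two representatives
are equal in V \<otimes> W iff their difference in the free k-vector space on V \<times> W lies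
in the span of the bilinearity relations (the textbook construction).\<close>

definition fvec :: "'x list \<Rightarrow> 'x \<Rightarrow> 'k::comm_ring_1" where
  "fvec t = (\<lambda>p. of_nat (count_list t p))"

definition dlt :: "'x \<Rightarrow> 'x \<Rightarrow> 'k::comm_ring_1" where
  "dlt p = (\<lambda>q. if q = p then 1 else 0)"

definition fscale :: "'k::comm_ring_1 \<Rightarrow> ('x \<Rightarrow> 'k) \<Rightarrow> ('x \<Rightarrow> 'k)" where
  "fscale c f = (\<lambda>p. c * f p)"

definition tens_rel2 ::
  "('k::field \<Rightarrow> 'a::ab_group_add \<Rightarrow> 'a) \<Rightarrow> ('k \<Rightarrow> 'b::ab_group_add \<Rightarrow> 'b) \<Rightarrow> ('a \<times> 'b \<Rightarrow> 'k) set" where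
  "tens_rel2 s1 s2 =
     {dlt (x + x', y) - dlt (x, y) - dlt (x', y) | x x' y. True} \<union>
     {dlt (x, y + y') - dlt (x, y) - dlt (x, y') | x y y'. True} \<union>
     {dlt (s1 c x, y) - fscale c (dlt (x, y)) | c x y. True} \<union>
     {dlt (x, s2 c y) - fscale c (dlt (x, y)) | c x y. True}"

definition teq2 ::
  "('k::field \<Rightarrow> 'a::ab_group_add \<Rightarrow> 'a) \<Rightarrow> ('k \<Rightarrow> 'b::ab_group_add \<Rightarrow> 'b) \<Rightarrow>
   ('a \<times> 'b) list \<Rightarrow> ('a \<times> 'b) list \<Rightarrow> bool" where
  "teq2 s1 s2 t u \<longleftrightarrow> fvec t - fvec u \<in> module.span fscale (tens_rel2 s1 s2)"

definition tens_rel3 ::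
  "('k::field \<Rightarrow> 'a::ab_group_add \<Rightarrow> 'a) \<Rightarrow> ('k \<Rightarrow> 'b::ab_group_add \<Rightarrow> 'b) \<Rightarrow>
   ('k \<Rightarrow> 'c::ab_group_add \<Rightarrow> 'c) \<Rightarrow> ('a \<times> 'b \<times> 'c \<Rightarrow> 'k) set" where
  "tens_rel3 s1 s2 s3 =
     {dlt (x + x', y, z) - dlt (x, y, z) - dlt (x', y, z) | x x' y z. True} \<union>
     {dlt (x, y + y', z) - dlt (x, y, z) - dlt (x, y', z) | x y y' z. True} \<union>
     {dlt (x, y, z + z') - dlt (x, y, z) - dlt (x, y, z') | x y z z'. True} \<union>
     {dlt (s1 c x, y, z) - fscale c (dlt (x, y, z)) | c x y z. True} \<union>
     {dlt (x, s2 c y, z) - fscale c (dlt (x, y, z)) | c x y z. True} \<union>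
     {dlt (x, y, s3 c z) - fscale c (dlt (x, y, z)) | c x y z. True}"

definition teq3 ::
  "('k::field \<Rightarrow> 'a::ab_group_add \<Rightarrow> 'a) \<Rightarrow> ('k \<Rightarrow> 'b::ab_group_add \<Rightarrow> 'b) \<Rightarrow>
   ('k \<Rightarrow> 'c::ab_group_add \<Rightarrow> 'c) \<Rightarrow> ('a \<times> 'b \<times> 'c) list \<Rightarrow> ('a \<times> 'b \<times> 'c) list \<Rightarrow> bool" where
  "teq3 s1 s2 s3 t u \<longleftrightarrow> fvec t - fvec u \<in> module.span fscale (tens_rel3 s1 s2 s3)"

definition tmul :: "('a::times \<times> 'b::times) list \<Rightarrow> ('a \<times> 'b) list \<Rightarrow> ('a \<times> 'b) list" where
  "tmul t u = concat (map (\<lambda>(x, y). map (\<lambda>(x', y'). (x * x', y * y')) u) t)"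

text \<open>(\<Delta> \<otimes> id) and (id \<otimes> \<delta>) on representatives.\<close>
definition left_apply :: "('a \<Rightarrow> ('a \<times> 'a) list) \<Rightarrow> ('a \<times> 'c) list \<Rightarrow> ('a \<times> 'a \<times> 'c) list" where
  "left_apply D t = concat (map (\<lambda>(x, z). map (\<lambda>(u, v). (u, v, z)) (D x)) t)"

definition right_apply :: "('c \<Rightarrow> ('b \<times> 'c) list) \<Rightarrow> ('a \<times> 'c) list \<Rightarrow> ('a \<times> 'b \<times> 'c) list" where
  "right_apply D t = concat (map (\<lambda>(x, z). map (\<lambda>(u, v). (x, u, v)) (D z)) t)"

definition k_algebra :: "('k::field \<Rightarrow> 'a::ring_1 \<Rightarrow> 'a) \<Rightarrow> bool" where
  "k_algebra s \<longleftrightarrow> vector_space s \<and>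
     (\<forall>c x y. s c (x * y) = s c x * y \<and> s c (x * y) = x * s c y)"

definition hopf_algebra ::
  "('k::field \<Rightarrow> 'a::ring_1 \<Rightarrow> 'a) \<Rightarrow> ('a \<Rightarrow> ('a \<times> 'a) list) \<Rightarrow> ('a \<Rightarrow> 'k) \<Rightarrow> ('a \<Rightarrow> 'a) \<Rightarrow> bool" where
  "hopf_algebra s \<Delta> \<epsilon> S \<longleftrightarrow> k_algebra s \<and>
     (\<forall>x y. teq2 s s (\<Delta> (x + y)) (\<Delta> x @ \<Delta> y)) \<and>
     (\<forall>c x. teq2 s s (\<Delta> (s c x)) (map (\<lambda>(u, v). (s c u, v)) (\<Delta> x))) \<and>
     (\<forall>x y. teq2 s s (\<Delta> (x * y)) (tmul (\<Delta> x) (\<Delta> y))) \<and>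
     teq2 s s (\<Delta> 1) [(1, 1)] \<and>
     (\<forall>x. teq3 s s s (left_apply \<Delta> (\<Delta> x)) (right_apply \<Delta> (\<Delta> x))) \<and>
     Vector_Spaces.linear s (*) \<epsilon> \<and> (\<forall>x y. \<epsilon> (x * y) = \<epsilon> x * \<epsilon> y) \<and> \<epsilon> 1 = 1 \<and>
     (\<forall>x. (\<Sum>(u, v)\<leftarrow>\<Delta> x. s (\<epsilon> u) v) = x) \<and>
     (\<forall>x. (\<Sum>(u, v)\<leftarrow>\<Delta> x. s (\<epsilon> v) u) = x) \<and>
     Vector_Spaces.linear s s S \<and>
     (\<forall>x. (\<Sum>(u, v)\<leftarrow>\<Delta> x. S u * v) = s (\<epsilon> x) 1) \<and>
     (\<forall>x. (\<Sum>(u, v)\<leftarrow>\<Delta> x. u * S v) = s (\<epsilon> x) 1)"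

definition hopf_subalgebra ::
  "('k::field \<Rightarrow> 'a::ring_1 \<Rightarrow> 'a) \<Rightarrow> ('a \<Rightarrow> ('a \<times> 'a) list) \<Rightarrow> ('a \<Rightarrow> 'a) \<Rightarrow> 'a set \<Rightarrow> bool" where
  "hopf_subalgebra s \<Delta> S K' \<longleftrightarrow> module.subspace s K' \<and> 1 \<in> K' \<and>
     (\<forall>x\<in>K'. \<forall>y\<in>K'. x * y \<in> K') \<and>
     (\<forall>x\<in>K'. \<exists>t. set t \<subseteq> K' \<times> K' \<and> teq2 s s (\<Delta> x) t) \<and>
     S ` K' \<subseteq> K'"

definition hopf_endo ::
  "('k::field \<Rightarrow> 'a::ring_1 \<Rightarrow> 'a) \<Rightarrow> ('a \<Rightarrow> ('a \<times> 'a) list) \<Rightarrow> ('a \<Rightarrow> 'k) \<Rightarrow> ('a \<Rightarrow> 'a) \<Rightarrow>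
   ('a \<Rightarrow> 'a) \<Rightarrow> bool" where
  "hopf_endo s \<Delta> \<epsilon> S f \<longleftrightarrow> Vector_Spaces.linear s s f \<and>
     (\<forall>x y. f (x * y) = f x * f y) \<and> f 1 = 1 \<and>
     (\<forall>x. teq2 s s (\<Delta> (f x)) (map (\<lambda>(u, v). (f u, f v)) (\<Delta> x))) \<and>
     (\<forall>x. \<epsilon> (f x) = \<epsilon> x) \<and> (\<forall>x. S (f x) = f (S x))"

definition ring_inv :: "'a::ring_1 \<Rightarrow> 'a" where
  "ring_inv x = (THE y. x * y = 1 \<and> y * x = 1)"

definition connected_graded_algebra ::
  "('k::field \<Rightarrow> 'e::ring_1 \<Rightarrow> 'e) \<Rightarrow> (nat \<Rightarrow> 'e set) \<Rightarrow> bool" where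
  "connected_graded_algebra s Egr \<longleftrightarrow> k_algebra s \<and>
     (\<forall>d. module.subspace s (Egr d)) \<and>
     (\<forall>e. \<exists>!c. (\<forall>d. c d \<in> Egr d) \<and> finite {d. c d \<noteq> 0} \<and> e = (\<Sum>d\<in>{d. c d \<noteq> 0}. c d)) \<and>
     (\<forall>i j. \<forall>x\<in>Egr i. \<forall>y\<in>Egr j. x * y \<in> Egr (i + j)) \<and>
     Egr 0 = range (\<lambda>c. s c 1)"

definition graded_frobenius ::
  "('k::field \<Rightarrow> 'e::ring_1 \<Rightarrow> 'e) \<Rightarrow> (nat \<Rightarrow> 'e set) \<Rightarrow> nat \<Rightarrow> ('e \<Rightarrow> 'e \<Rightarrow> 'k) \<Rightarrow> bool" where
  "graded_frobenius s Egr l B \<longleftrightarrow>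
     (\<exists>F. finite F \<and> module.span s F = UNIV) \<and>
     Egr l \<noteq> {0} \<and> (\<forall>d>l. Egr d = {0}) \<and>
     (\<forall>b. Vector_Spaces.linear s (*) (\<lambda>a. B a b)) \<and>
     (\<forall>a. Vector_Spaces.linear s (*) (\<lambda>b. B a b)) \<and>
     (\<forall>a b c. B (a * b) c = B a (b * c)) \<and>
     (\<forall>a. (\<forall>b. B a b = 0) \<longrightarrow> a = 0) \<and>
     (\<forall>b. (\<forall>a. B a b = 0) \<longrightarrow> b = 0) \<and>
     (\<forall>i j a b. a \<in> Egr i \<longrightarrow> b \<in> Egr j \<longrightarrow> i + j \<noteq> l \<longrightarrow> B a b = 0)"

definition nakayama_aut ::
  "('k::field \<Rightarrow> 'e::ring_1 \<Rightarrow> 'e) \<Rightarrow> (nat \<Rightarrow> 'e set) \<Rightarrow> ('e \<Rightarrow> 'e \<Rightarrow> 'k) \<Rightarrow> ('e \<Rightarrow> 'e) \<Rightarrow> bool" where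
  "nakayama_aut s Egr B \<mu> \<longleftrightarrow> Vector_Spaces.linear s s \<mu> \<and> bij \<mu> \<and>
     (\<forall>x y. \<mu> (x * y) = \<mu> x * \<mu> y) \<and> \<mu> 1 = 1 \<and>
     (\<forall>d. \<mu> ` Egr d = Egr d) \<and>
     (\<forall>a b. B a b = B b (\<mu> a))"

definition graded_comodule_algebra ::
  "('k::field \<Rightarrow> 'a::ring_1 \<Rightarrow> 'a) \<Rightarrow> ('a \<Rightarrow> ('a \<times> 'a) list) \<Rightarrow> ('a \<Rightarrow> 'k) \<Rightarrow>
   ('k \<Rightarrow> 'e::ring_1 \<Rightarrow> 'e) \<Rightarrow> (nat \<Rightarrow> 'e set) \<Rightarrow> ('e \<Rightarrow> ('a \<times> 'e) list) \<Rightarrow> bool" where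
  "graded_comodule_algebra sK \<Delta> \<epsilon> sE Egr \<rho> \<longleftrightarrow>
     (\<forall>x y. teq2 sK sE (\<rho> (x + y)) (\<rho> x @ \<rho> y)) \<and>
     (\<forall>c x. teq2 sK sE (\<rho> (sE c x)) (map (\<lambda>(u, v). (sK c u, v)) (\<rho> x))) \<and>
     (\<forall>x. teq3 sK sK sE (left_apply \<Delta> (\<rho> x)) (right_apply \<rho> (\<rho> x))) \<and>
     (\<forall>x. (\<Sum>(u, v)\<leftarrow>\<rho> x. sE (\<epsilon> u) v) = x) \<and>
     (\<forall>x y. teq2 sK sE (\<rho> (x * y)) (tmul (\<rho> x) (\<rho> y))) \<and>
     teq2 sK sE (\<rho> 1) [(1, 1)] \<and>
     (\<forall>d. \<forall>x\<in>Egr d. \<exists>t. snd ` set t \<subseteq> Egr d \<and> teq2 sK sE (\<rho> x) t)"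

definition inner_faithful_E1 ::
  "('k::field \<Rightarrow> 'a::ring_1 \<Rightarrow> 'a) \<Rightarrow> ('a \<Rightarrow> ('a \<times> 'a) list) \<Rightarrow> ('a \<Rightarrow> 'a) \<Rightarrow>
   ('k \<Rightarrow> 'e::ring_1 \<Rightarrow> 'e) \<Rightarrow> (nat \<Rightarrow> 'e set) \<Rightarrow> ('e \<Rightarrow> ('a \<times> 'e) list) \<Rightarrow> bool" where
  "inner_faithful_E1 sK \<Delta> S sE Egr \<rho> \<longleftrightarrow>
     (\<forall>K'. hopf_subalgebra sK \<Delta> S K' \<and> K' \<noteq> UNIV \<longrightarrow>
        \<not> (\<forall>x\<in>Egr 1. \<exists>t. set t \<subseteq> K' \<times> Egr 1 \<and> teq2 sK sE (\<rho> x) t))"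

section \<open>Square matrices as functions on indices < n\<close>

definition mat_inv :: "nat \<Rightarrow> (nat \<Rightarrow> nat \<Rightarrow> 'k::field) \<Rightarrow> (nat \<Rightarrow> nat \<Rightarrow> 'k)" where
  "mat_inv n A = (THE B. (\<forall>i j. (n \<le> i \<or> n \<le> j) \<longrightarrow> B i j = 0) \<and>
      (\<forall>i<n. \<forall>j<n. (\<Sum>k<n. A i k * B k j) = (if i = j then 1 else 0)) \<and>
      (\<forall>i<n. \<forall>j<n. (\<Sum>k<n. B i k * A k j) = (if i = j then 1 else 0)))"

end

theory Submission
  imports Defs
begin


definition supp :: "('x \<Rightarrow> 'k::zero) \<Rightarrow> 'x set" where
  "supp F = {p. F p \<noteq> 0}"

definition Lg :: "('x \<Rightarrow> 'k::comm_ring_1) \<Rightarrow> ('x \<Rightarrow> 'k) \<Rightarrow> 'k" where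
  "Lg g F = (\<Sum>p\<in>supp F. F p * g p)"

lemma Lg_superset:
  assumes "finite A" "supp F \<subseteq> A"
  shows "Lg g F = (\<Sum>p\<in>A. F p * g p)"
  unfolding Lg_def
  by (rule sum.mono_neutral_left) (use assms in \<open>auto simp: supp_def\<close>)

lemma supp_add: "supp (F + G) \<subseteq> supp F \<union> supp (G :: 'x \<Rightarrow> 'k::comm_ring_1)"
  by (auto simp: supp_def)
lemma supp_diff: "supp (F - G) \<subseteq> supp F \<union> supp (G :: 'x \<Rightarrow> 'k::comm_ring_1)"
  by (auto simp: supp_def)
lemma supp_fscale: "supp (fscale c F) \<subseteq> supp F"
  by (auto simp: supp_def fscale_def)
lemma supp_dlt: "supp (dlt q :: 'x \<Rightarrow> 'k::comm_ring_1) \<subseteq> {q}"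
  by (auto simp: supp_def dlt_def)
lemma supp_zero[simp]: "supp 0 = {}"
  by (auto simp: supp_def)

definition fsupp :: "('x \<Rightarrow> 'k::zero) \<Rightarrow> bool" where
  "fsupp F \<longleftrightarrow> finite (supp F)"

lemma fsupp_add: "fsupp F \<Longrightarrow> fsupp G \<Longrightarrow> fsupp (F + (G :: 'x \<Rightarrow> 'k::comm_ring_1))"
  unfolding fsupp_def using supp_add[of F G] by (rule finite_subset) simp
lemma fsupp_diff: "fsupp F \<Longrightarrow> fsupp G \<Longrightarrow> fsupp (F - (G :: 'x \<Rightarrow> 'k::comm_ring_1))"
  unfolding fsupp_def using supp_diff[of F G] by (rule finite_subset) simp
lemma fsupp_fscale: "fsupp F \<Longrightarrow> fsupp (fscale c F)"
  unfolding fsupp_def using supp_fscale[of c F] by (rule finite_subset)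
lemma fsupp_dlt: "fsupp (dlt q :: 'x \<Rightarrow> 'k::comm_ring_1)"
  unfolding fsupp_def using supp_dlt[of q] by (rule finite_subset) simp
lemma fsupp_zero: "fsupp 0"
  unfolding fsupp_def by simp

lemma Lg_add: "fsupp F \<Longrightarrow> fsupp G \<Longrightarrow> Lg g (F + G) = Lg g F + Lg g G"
  apply (subst (1 2 3) Lg_superset[where A="supp F \<union> supp G"])
  using supp_add[of F G] by (auto simp: fsupp_def sum.distrib algebra_simps)

lemma Lg_diff: "fsupp F \<Longrightarrow> fsupp G \<Longrightarrow> Lg g (F - G) = Lg g F - Lg g G"
  apply (subst (1 2 3) Lg_superset[where A="supp F \<union> supp G"])
  using supp_diff[of F G] by (auto simp: fsupp_def sum_subtractf algebra_simps)

lemma Lg_fscale: "fsupp F \<Longrightarrow> Lg g (fscale c F) = c * Lg g F"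
  apply (subst (1 2) Lg_superset[where A="supp F"])
  using supp_fscale[of c F] by (auto simp: fsupp_def sum_distrib_left fscale_def algebra_simps)

lemma Lg_dlt: "Lg g (dlt q) = g q"
  apply (subst Lg_superset[where A="{q}"])
  using supp_dlt[of q] by (auto simp: dlt_def)

lemma Lg_zero: "Lg g 0 = 0"
  by (simp add: Lg_def)

lemma fvec_Nil: "fvec [] = 0"
  by (auto simp: fvec_def)
lemma fvec_Cons: "(fvec (p # t) :: 'x \<Rightarrow> 'k::comm_ring_1) = dlt p + fvec t"
  by (auto simp: fvec_def dlt_def)

lemma fsupp_fvec: "fsupp (fvec t :: 'x \<Rightarrow> 'k::comm_ring_1)"
proof (induct t)
  case Nil show ?case by (subst fvec_Nil) (rule fsupp_zero)
next
  case (Cons p t) show ?case by (subst fvec_Cons) (rule fsupp_add[OF fsupp_dlt Cons])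
qed

lemma Lg_fvec: "Lg g (fvec t) = sum_list (map g t)"
proof (induct t)
  case Nil show ?case by (subst fvec_Nil) (simp add: Lg_zero)
next
  case (Cons p t) show ?case
    by (subst fvec_Cons, subst Lg_add[OF fsupp_dlt fsupp_fvec]) (simp add: Lg_dlt Cons)
qed

lemma module_fscale: "module (fscale :: 'k::comm_ring_1 \<Rightarrow> ('x \<Rightarrow> 'k) \<Rightarrow> _)"
  by unfold_locales (auto simp: fscale_def algebra_simps)

lemma vs_fscale: "vector_space (fscale :: 'k::field \<Rightarrow> ('x \<Rightarrow> 'k) \<Rightarrow> _)"
  using module_fscale module_iff_vector_space by blast

lemma span_Lg:
  fixes R :: "('x \<Rightarrow> 'k::comm_ring_1) set"
  assumes R: "\<And>r. r \<in> R \<Longrightarrow> fsupp r \<and> Lg g r = 0"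
    and F: "F \<in> module.span fscale R"
  shows "fsupp F \<and> Lg g F = 0"
proof -
  interpret module "fscale :: 'k \<Rightarrow> ('x \<Rightarrow> 'k) \<Rightarrow> _" by (rule module_fscale)
  show ?thesis using F
  proof (induct rule: span_induct)
    case base
    show ?case unfolding subspace_def
      by (auto simp: fsupp_zero Lg_zero fsupp_add Lg_add fsupp_fscale Lg_fscale)
  next
    case (step x) then show ?case using R by auto
  qed
qed

lemma span_eval:
  fixes R :: "('x \<Rightarrow> 'k::comm_ring_1) set"
  assumes R: "\<And>r. r \<in> R \<Longrightarrow> fsupp r \<and> Lg g r = 0"
    and F: "fvec t - fvec u \<in> module.span fscale R"
  shows "sum_list (map g t) = sum_list (map g u)"
proof -
  have "Lg g (fvec t - fvec u) = 0" using span_Lg[OF R F] by auto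
  then show ?thesis by (simp add: Lg_diff fsupp_fvec Lg_fvec)
qed

lemma sep:
  assumes vs: "vector_space sc" and v: "v \<notin> module.span sc R"
  shows "\<exists>\<phi>. Vector_Spaces.linear sc ((*) :: 'k::field \<Rightarrow> 'k \<Rightarrow> 'k) \<phi> \<and>
      (\<forall>r\<in>module.span sc R. \<phi> r = 0) \<and> \<phi> v = 1"
proof -
  interpret vector_space sc by (rule vs)
  interpret p: vector_space_pair sc "(*) :: 'k \<Rightarrow> 'k \<Rightarrow> 'k"
    by unfold_locales (auto simp: algebra_simps)
  obtain B where B: "B \<subseteq> span R" "independent B" "span R \<subseteq> span B"
    by (rule basis_exists[of "span R"]) auto
  have sB: "span B = span R"
    using B span_minimal[of B "span R"] by auto
  have vB: "v \<notin> span B" using v sB by simp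
  have ind: "independent (insert v B)" using independent_insertI[OF vB B(2)] .
  obtain g where g: "Vector_Spaces.linear sc (*) g" "\<forall>x\<in>insert v B. g x = (if x = v then 1 else 0)"
    using p.linear_independent_extend[OF ind, of "\<lambda>x. if x = v then 1 else 0"] by blast
  have "\<forall>r\<in>span B. g r = 0"
  proof
    fix r assume "r \<in> span B"
    then show "g r = 0"
    proof (induct rule: span_induct)
      case base
      interpret l: Vector_Spaces.linear sc "(*)" g by (rule g(1))
      show ?case unfolding subspace_def using l.add l.scale by auto
    next
      case (step x)
      then have "x \<noteq> v" using vB span_base by auto
      then show ?case using g(2) step by auto
    qed
  qed
  then show ?thesis using g sB by auto
qed

lemma sep0:
  assumes vs: "vector_space sc" and v: "v \<noteq> 0"
  shows "\<exists>\<phi>. Vector_Spaces.linear sc ((*) :: 'k::field \<Rightarrow> 'k \<Rightarrow> 'k) \<phi> \<and> \<phi> v = 1"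
proof -
  interpret vector_space sc by (rule vs)
  have "v \<notin> span {}" using v by simp
  then show ?thesis using sep[OF vs] by blast
qed

section \<open>Bilinear and trilinear evaluation\<close>

definition bil :: "('k::field \<Rightarrow> 'a::ab_group_add \<Rightarrow> 'a) \<Rightarrow> ('k \<Rightarrow> 'b::ab_group_add \<Rightarrow> 'b) \<Rightarrow>
   ('k \<Rightarrow> 'c::ab_group_add \<Rightarrow> 'c) \<Rightarrow> ('a \<Rightarrow> 'b \<Rightarrow> 'c) \<Rightarrow> bool" where
  "bil s1 s2 sc \<beta> \<longleftrightarrow> (\<forall>x x' y. \<beta> (x + x') y = \<beta> x y + \<beta> x' y) \<and>
     (\<forall>x y y'. \<beta> x (y + y') = \<beta> x y + \<beta> x y') \<and>
     (\<forall>c x y. \<beta> (s1 c x) y = sc c (\<beta> x y)) \<and> (\<forall>c x y. \<beta> x (s2 c y) = sc c (\<beta> x y))"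

definition tril :: "('k::field \<Rightarrow> 'a::ab_group_add \<Rightarrow> 'a) \<Rightarrow> ('k \<Rightarrow> 'b::ab_group_add \<Rightarrow> 'b) \<Rightarrow>
   ('k \<Rightarrow> 'c::ab_group_add \<Rightarrow> 'c) \<Rightarrow> ('k \<Rightarrow> 'd::ab_group_add \<Rightarrow> 'd) \<Rightarrow> ('a \<Rightarrow> 'b \<Rightarrow> 'c \<Rightarrow> 'd) \<Rightarrow> bool" where
  "tril s1 s2 s3 sc h \<longleftrightarrow> (\<forall>x x' y z. h (x + x') y z = h x y z + h x' y z) \<and>
     (\<forall>x y y' z. h x (y + y') z = h x y z + h x y' z) \<and>
     (\<forall>x y z z'. h x y (z + z') = h x y z + h x y z') \<and>
     (\<forall>c x y z. h (s1 c x) y z = sc c (h x y z)) \<and> (\<forall>c x y z. h x (s2 c y) z = sc c (h x y z)) \<and>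
     (\<forall>c x y z. h x y (s3 c z) = sc c (h x y z))"

definition lsum :: "('a \<Rightarrow> 'b \<Rightarrow> 'c::monoid_add) \<Rightarrow> ('a \<times> 'b) list \<Rightarrow> 'c" where
  "lsum \<beta> t = sum_list (map (\<lambda>(x, y). \<beta> x y) t)"

definition lsum3 :: "('a \<Rightarrow> 'b \<Rightarrow> 'c \<Rightarrow> 'd::monoid_add) \<Rightarrow> ('a \<times> 'b \<times> 'c) list \<Rightarrow> 'd" where
  "lsum3 h t = sum_list (map (\<lambda>(x, y, z). h x y z) t)"

lemma lsum_Nil[simp]: "lsum \<beta> [] = 0" by (simp add: lsum_def)
lemma lsum_Cons[simp]: "lsum \<beta> ((x, y) # t) = \<beta> x y + lsum \<beta> t" by (simp add: lsum_def)
lemma lsum_append[simp]: "lsum \<beta> (t @ u) = lsum \<beta> t + lsum \<beta> u" by (simp add: lsum_def)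
lemma lsum3_Nil[simp]: "lsum3 h [] = 0" by (simp add: lsum3_def)
lemma lsum3_Cons[simp]: "lsum3 h ((x, y, z) # t) = h x y z + lsum3 h t" by (simp add: lsum3_def)
lemma lsum3_append[simp]: "lsum3 h (t @ u) = lsum3 h t + lsum3 h u" by (simp add: lsum3_def)

lemma teq2_eval_k:
  fixes \<beta> :: "'a::ab_group_add \<Rightarrow> 'b::ab_group_add \<Rightarrow> 'k::field"
  assumes "teq2 s1 s2 t u" "bil s1 s2 (*) \<beta>"
  shows "lsum \<beta> t = lsum \<beta> u"
proof -
  let ?g = "\<lambda>(x, y). \<beta> x y"
  have R: "fsupp r \<and> Lg ?g r = 0" if "r \<in> tens_rel2 s1 s2" for r
  proof -
    have b: "bil s1 s2 (*) \<beta>" by (rule assms(2))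
    from that consider (a) x x' y where "r = dlt (x + x', y) - dlt (x, y) - dlt (x', y)"
      | (b) x y y' where "r = dlt (x, y + y') - dlt (x, y) - dlt (x, y')"
      | (c) c x y where "r = dlt (s1 c x, y) - fscale c (dlt (x, y))"
      | (d) c x y where "r = dlt (x, s2 c y) - fscale c (dlt (x, y))"
      using that unfolding tens_rel2_def by (elim UnE; auto)
    then show ?thesis
    proof cases
      case a then show ?thesis using b unfolding bil_def
        by (simp add: fsupp_diff fsupp_dlt Lg_diff Lg_dlt)
    next
      case b then show ?thesis using \<open>bil s1 s2 (*) \<beta>\<close> unfolding bil_def
        by (simp add: fsupp_diff fsupp_dlt Lg_diff Lg_dlt)
    next
      case c then show ?thesis using b unfolding bil_def
        by (simp add: fsupp_diff fsupp_dlt fsupp_fscale Lg_diff Lg_dlt Lg_fscale)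
    next
      case d then show ?thesis using b unfolding bil_def
        by (simp add: fsupp_diff fsupp_dlt fsupp_fscale Lg_diff Lg_dlt Lg_fscale)
    qed
  qed
  show ?thesis using span_eval[of "tens_rel2 s1 s2" ?g t u, OF R] assms(1)
    unfolding teq2_def lsum_def by auto
qed

lemma teq3_eval_k:
  fixes h :: "'a::ab_group_add \<Rightarrow> 'b::ab_group_add \<Rightarrow> 'c::ab_group_add \<Rightarrow> 'k::field"
  assumes "teq3 s1 s2 s3 t u" "tril s1 s2 s3 (*) h"
  shows "lsum3 h t = lsum3 h u"
proof -
  let ?g = "\<lambda>(x, y, z). h x y z"
  have R: "fsupp r \<and> Lg ?g r = 0" if "r \<in> tens_rel3 s1 s2 s3" for r
  proof -
    have b: "tril s1 s2 s3 (*) h" by (rule assms(2))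
    from that consider (a) x x' y z where "r = dlt (x + x', y, z) - dlt (x, y, z) - dlt (x', y, z)"
      | (b) x y y' z where "r = dlt (x, y + y', z) - dlt (x, y, z) - dlt (x, y', z)"
      | (b2) x y z z' where "r = dlt (x, y, z + z') - dlt (x, y, z) - dlt (x, y, z')"
      | (c) c x y z where "r = dlt (s1 c x, y, z) - fscale c (dlt (x, y, z))"
      | (d) c x y z where "r = dlt (x, s2 c y, z) - fscale c (dlt (x, y, z))"
      | (e) c x y z where "r = dlt (x, y, s3 c z) - fscale c (dlt (x, y, z))"
      using that unfolding tens_rel3_def by (elim UnE; auto)
    then show ?thesis
    proof cases
      case a then show ?thesis using b unfolding tril_def
        by (simp add: fsupp_diff fsupp_dlt Lg_diff Lg_dlt)
    next
      case b then show ?thesis using \<open>tril s1 s2 s3 (*) h\<close> unfolding tril_def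
        by (simp add: fsupp_diff fsupp_dlt Lg_diff Lg_dlt)
    next
      case b2 then show ?thesis using b unfolding tril_def
        by (simp add: fsupp_diff fsupp_dlt Lg_diff Lg_dlt)
    next
      case c then show ?thesis using b unfolding tril_def
        by (simp add: fsupp_diff fsupp_dlt fsupp_fscale Lg_diff Lg_dlt Lg_fscale)
    next
      case d then show ?thesis using b unfolding tril_def
        by (simp add: fsupp_diff fsupp_dlt fsupp_fscale Lg_diff Lg_dlt Lg_fscale)
    next
      case e then show ?thesis using b unfolding tril_def
        by (simp add: fsupp_diff fsupp_dlt fsupp_fscale Lg_diff Lg_dlt Lg_fscale)
    qed
  qed
  show ?thesis using span_eval[of "tens_rel3 s1 s2 s3" ?g t u, OF R] assms(1)
    unfolding teq3_def lsum3_def by auto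
qed

lemma linear_sum_list:
  assumes "Vector_Spaces.linear s1 s2 f"
  shows "f (sum_list xs) = sum_list (map f xs)"
proof -
  interpret Vector_Spaces.linear s1 s2 f by (rule assms)
  show ?thesis by (induct xs) (auto simp: add)
qed

lemma linear_lsum:
  assumes "Vector_Spaces.linear s1 s2 f"
  shows "f (lsum \<beta> t) = lsum (\<lambda>x y. f (\<beta> x y)) t"
proof -
  interpret Vector_Spaces.linear s1 s2 f by (rule assms)
  show ?thesis by (induct t) (auto simp: add lsum_def)
qed

lemma linear_lsum3:
  assumes "Vector_Spaces.linear s1 s2 f"
  shows "f (lsum3 h t) = lsum3 (\<lambda>x y z. f (h x y z)) t"
proof -
  interpret Vector_Spaces.linear s1 s2 f by (rule assms)
  show ?thesis by (induct t) (auto simp: add lsum3_def)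
qed

lemma bil_compose:
  assumes "bil s1 s2 sc \<beta>" "Vector_Spaces.linear sc sd f"
  shows "bil s1 s2 sd (\<lambda>x y. f (\<beta> x y))"
proof -
  interpret Vector_Spaces.linear sc sd f by (rule assms)
  show ?thesis using assms(1) unfolding bil_def by (auto simp: add scale)
qed

lemma tril_compose:
  assumes "tril s1 s2 s3 sc h" "Vector_Spaces.linear sc sd f"
  shows "tril s1 s2 s3 sd (\<lambda>x y z. f (h x y z))"
proof -
  interpret Vector_Spaces.linear sc sd f by (rule assms)
  show ?thesis using assms(1) unfolding tril_def by (auto simp: add scale)
qed

lemma teq2_eval:
  assumes vs: "vector_space sc" and "teq2 s1 s2 t u" and b: "bil s1 s2 sc \<beta>"
  shows "lsum \<beta> t = lsum \<beta> u"
proof (rule ccontr)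
  assume ne: "lsum \<beta> t \<noteq> lsum \<beta> u"
  then obtain \<phi> where \<phi>: "Vector_Spaces.linear sc (*) \<phi>" "\<phi> (lsum \<beta> t - lsum \<beta> u) = 1"
    using sep0[OF vs, of "lsum \<beta> t - lsum \<beta> u"] by auto
  interpret Vector_Spaces.linear sc "(*)" \<phi> by (rule \<phi>(1))
  have "lsum (\<lambda>x y. \<phi> (\<beta> x y)) t = lsum (\<lambda>x y. \<phi> (\<beta> x y)) u"
    by (rule teq2_eval_k[OF assms(2) bil_compose[OF b \<phi>(1)]])
  then have "\<phi> (lsum \<beta> t) = \<phi> (lsum \<beta> u)" by (simp add: linear_lsum[OF \<phi>(1)])
  then show False using \<phi>(2) by (simp add: diff)
qed

lemma teq3_eval:
  assumes vs: "vector_space sc" and "teq3 s1 s2 s3 t u" and b: "tril s1 s2 s3 sc h"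
  shows "lsum3 h t = lsum3 h u"
proof (rule ccontr)
  assume ne: "lsum3 h t \<noteq> lsum3 h u"
  then obtain \<phi> where \<phi>: "Vector_Spaces.linear sc (*) \<phi>" "\<phi> (lsum3 h t - lsum3 h u) = 1"
    using sep0[OF vs, of "lsum3 h t - lsum3 h u"] by auto
  interpret Vector_Spaces.linear sc "(*)" \<phi> by (rule \<phi>(1))
  have "lsum3 (\<lambda>x y z. \<phi> (h x y z)) t = lsum3 (\<lambda>x y z. \<phi> (h x y z)) u"
    by (rule teq3_eval_k[OF assms(2) tril_compose[OF b \<phi>(1)]])
  then have "\<phi> (lsum3 h t) = \<phi> (lsum3 h u)" by (simp add: linear_lsum3[OF \<phi>(1)])
  then show False using \<phi>(2) by (simp add: diff)
qed

lemma teq2_I: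
  fixes t u :: "('a::ab_group_add \<times> 'b::ab_group_add) list"
    and s1 :: "'k::field \<Rightarrow> 'a \<Rightarrow> 'a"
  assumes H: "\<And>\<beta> :: 'a \<Rightarrow> 'b \<Rightarrow> 'k. bil s1 s2 (*) \<beta> \<Longrightarrow> lsum \<beta> t = lsum \<beta> u"
  shows "teq2 s1 s2 t u"
proof (rule ccontr)
  assume "\<not> teq2 s1 s2 t u"
  then have nd: "fvec t - fvec u \<notin> module.span fscale (tens_rel2 s1 s2)" by (simp add: teq2_def)
  obtain \<phi> :: "('a \<times> 'b \<Rightarrow> 'k) \<Rightarrow> 'k" where \<phi>: "Vector_Spaces.linear fscale (*) \<phi>"
    "\<forall>r\<in>module.span fscale (tens_rel2 s1 s2). \<phi> r = 0" "\<phi> (fvec t - fvec u) = 1"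
    using sep[OF vs_fscale nd] by blast
  interpret l: Vector_Spaces.linear fscale "(*)" \<phi> by (rule \<phi>(1))
  interpret m: module "fscale :: 'k \<Rightarrow> ('a \<times> 'b \<Rightarrow> 'k) \<Rightarrow> _" by (rule module_fscale)
  have R0: "\<phi> r = 0" if "r \<in> tens_rel2 s1 s2" for r
    using \<phi>(2) module.span_base[OF module_fscale that] by blast
  define \<beta> where "\<beta> x y = \<phi> (dlt (x, y))" for x y
  have "bil s1 s2 (*) \<beta>"
    unfolding bil_def \<beta>_def
  proof (intro conjI allI)
    fix x x' y
    have "\<phi> (dlt (x + x', y) - dlt (x, y) - dlt (x', y)) = 0" by (rule R0) (unfold tens_rel2_def, blast)
    then show "\<phi> (dlt (x + x', y)) = \<phi> (dlt (x, y)) + \<phi> (dlt (x', y))" by (simp only: l.diff) (metis eq_iff_diff_eq_0 diff_diff_eq)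
  next
    fix x y y'
    have "\<phi> (dlt (x, y + y') - dlt (x, y) - dlt (x, y')) = 0" by (rule R0) (unfold tens_rel2_def, blast)
    then show "\<phi> (dlt (x, y + y')) = \<phi> (dlt (x, y)) + \<phi> (dlt (x, y'))" by (simp only: l.diff) (metis eq_iff_diff_eq_0 diff_diff_eq)
  next
    fix c x y
    have "\<phi> (dlt (s1 c x, y) - fscale c (dlt (x, y))) = 0" by (rule R0) (unfold tens_rel2_def, blast)
    then show "\<phi> (dlt (s1 c x, y)) = c * \<phi> (dlt (x, y))" by (simp add: l.diff l.scale)
  next
    fix c x y
    have "\<phi> (dlt (x, s2 c y) - fscale c (dlt (x, y))) = 0" by (rule R0) (unfold tens_rel2_def, blast)
    then show "\<phi> (dlt (x, s2 c y)) = c * \<phi> (dlt (x, y))" by (simp add: l.diff l.scale)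
  qed
  then have eq: "lsum \<beta> t = lsum \<beta> u" by (rule H)
  have fv: "\<phi> (fvec v) = lsum \<beta> v" for v :: "('a \<times> 'b) list"
  proof (induct v)
    case Nil show ?case by (subst fvec_Nil) (simp only: l.zero lsum_Nil)
  next
    case (Cons p v) then show ?case
      by (cases p) (simp only: fvec_Cons l.add lsum_Cons \<beta>_def)
  qed
  have "\<phi> (fvec t - fvec u) = 0" using eq by (simp add: l.diff fv)
  then show False using \<phi>(3) by simp
qed

lemma teq2_iff:
  fixes t u :: "('a::ab_group_add \<times> 'b::ab_group_add) list"
    and s1 :: "'k::field \<Rightarrow> 'a \<Rightarrow> 'a"
  shows "teq2 s1 s2 t u \<longleftrightarrow> (\<forall>\<beta> :: 'a \<Rightarrow> 'b \<Rightarrow> 'k. bil s1 s2 (*) \<beta> \<longrightarrow> lsum \<beta> t = lsum \<beta> u)"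
  using teq2_eval_k[of s1 s2 t u] teq2_I[of s1 s2 t u] by blast

lemma teq2_refl: "teq2 s1 s2 t t"
  by (simp add: teq2_iff)
lemma teq2_sym: "teq2 s1 s2 t u \<Longrightarrow> teq2 s1 s2 u t"
  by (simp add: teq2_iff)
lemma teq2_trans: "teq2 s1 s2 t u \<Longrightarrow> teq2 s1 s2 u v \<Longrightarrow> teq2 s1 s2 t v"
  by (simp add: teq2_iff)




lemma lsum_add_fun: "lsum (\<lambda>x y. f x y + g x y) t = lsum f t + (lsum g t :: 'c::comm_monoid_add)"
  by (induct t) (auto simp: algebra_simps)
lemma lsum_diff_fun: "lsum (\<lambda>x y. f x y - g x y) t = lsum f t - (lsum g t :: 'c::ab_group_add)"
  by (induct t) (auto simp: algebra_simps)
lemma lsum_zero_fun[simp]: "lsum (\<lambda>x y. 0) t = (0 :: 'c::monoid_add)"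
  by (induct t) auto
lemma lsum_map: "lsum \<beta> (map (\<lambda>(x, y). (f x y, g x y)) t) = lsum (\<lambda>x y. \<beta> (f x y) (g x y)) t"
  by (induct t) auto
lemma lsum_cong: "(\<And>x y. (x, y) \<in> set t \<Longrightarrow> f x y = g x y) \<Longrightarrow> lsum f t = lsum g t"
  by (induct t) auto
lemma lsum_concat: "lsum \<beta> (concat (map (\<lambda>(x, y). G x y) t)) = lsum (\<lambda>x y. lsum \<beta> (G x y)) t"
  by (induct t) auto
lemma lsum_swap: "lsum (\<lambda>x y. lsum (\<lambda>p q. f x y p q) u) t = (lsum (\<lambda>p q. lsum (\<lambda>x y. f x y p q) t) u :: 'c::comm_monoid_add)"
  by (induct t) (auto simp: lsum_add_fun)
lemma lsum_mult_left: "c * lsum f t = lsum (\<lambda>x y. c * f x y) t" for c :: "'a::ring"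
  by (induct t) (auto simp: algebra_simps)
lemma lsum_mult_right: "lsum f t * c = lsum (\<lambda>x y. f x y * c) t" for c :: "'a::ring"
  by (induct t) (auto simp: algebra_simps)
lemma lsum_linear: "Vector_Spaces.linear s1 s2 \<phi> \<Longrightarrow> \<phi> (lsum f t) = lsum (\<lambda>x y. \<phi> (f x y)) t"
  by (rule linear_lsum)

lemma lsum_tmul: "lsum \<beta> (tmul t u) = lsum (\<lambda>a b. lsum (\<lambda>c d. \<beta> (a * c) (b * d)) u) t"
proof -
  have "lsum \<beta> (map (\<lambda>(x', y'). (a * x', b * y')) u) = lsum (\<lambda>c d. \<beta> (a * c) (b * d)) u" for a b
    by (induct u) auto
  then show ?thesis unfolding tmul_def
    by (induct t) (auto simp: lsum_def)
qed

lemma lsum3_left_apply: "lsum3 h (left_apply D t) = lsum (\<lambda>u v. lsum (\<lambda>p q. h p q v) (D u)) t"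
proof -
  have "lsum3 h (map (\<lambda>(u, v). (u, v, z)) l) = lsum (\<lambda>p q. h p q z) l" for l z
    by (induct l) auto
  then show ?thesis unfolding left_apply_def by (induct t) (auto simp: lsum3_def lsum_def)
qed

lemma lsum3_right_apply: "lsum3 h (right_apply D t) = lsum (\<lambda>u v. lsum (\<lambda>p q. h u p q) (D v)) t"
proof -
  have "lsum3 h (map (\<lambda>(u, v). (x, u, v)) l) = lsum (\<lambda>p q. h x p q) l" for l x
    by (induct l) auto
  then show ?thesis unfolding right_apply_def by (induct t) (auto simp: lsum3_def lsum_def)
qed

definition lsc :: "('k \<Rightarrow> 'a \<Rightarrow> 'a) \<Rightarrow> 'k \<Rightarrow> ('a \<times> 'b) list \<Rightarrow> ('a \<times> 'b) list" where
  "lsc s c t = map (\<lambda>(u, v). (s c u, v)) t"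

lemma bilD:
  assumes "bil s1 s2 sc \<beta>"
  shows "\<beta> (x + x') y = \<beta> x y + \<beta> x' y" "\<beta> x (y + y') = \<beta> x y + \<beta> x y'"
    "\<beta> (s1 c x) y = sc c (\<beta> x y)" "\<beta> x (s2 c y) = sc c (\<beta> x y)"
  using assms unfolding bil_def by auto

lemma lsum_lsc:
  assumes "vector_space sc" "bil s1 s2 sc \<beta>"
  shows "lsum \<beta> (lsc s1 c t) = sc c (lsum \<beta> t)"
proof -
  interpret vector_space sc by (rule assms(1))
  show ?thesis unfolding lsc_def
    by (induct t) (auto simp: bilD[OF assms(2)] scale_right_distrib)
qed

lemma vs_field: "vector_space ((*) :: 'k::field \<Rightarrow> 'k \<Rightarrow> 'k)"
  by unfold_locales (auto simp: algebra_simps)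

lemma lsum_scale_fun:
  assumes "vector_space sc"
  shows "lsum (\<lambda>x y. sc c (f x y)) t = sc c (lsum f t)"
proof -
  interpret vector_space sc by (rule assms)
  show ?thesis by (induct t) (auto simp: scale_right_distrib)
qed

lemma lsum_swap3:
  "lsum (\<lambda>a b. lsum (\<lambda>c d. lsum (\<lambda>e f. F a b c d e f) w) v) u =
   (lsum (\<lambda>e f. lsum (\<lambda>a b. lsum (\<lambda>c d. F a b c d e f) v) u) w :: 'c::comm_monoid_add)"
proof -
  have "lsum (\<lambda>a b. lsum (\<lambda>c d. lsum (\<lambda>e f. F a b c d e f) w) v) u =
        lsum (\<lambda>a b. lsum (\<lambda>e f. lsum (\<lambda>c d. F a b c d e f) v) w) u"
    by (rule lsum_cong) (rule lsum_swap)
  also have "\<dots> = lsum (\<lambda>e f. lsum (\<lambda>a b. lsum (\<lambda>c d. F a b c d e f) v) u) w"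
    by (rule lsum_swap)
  finally show ?thesis .
qed

lemma bil_zero:
  assumes "vector_space sc" "bil s1 s2 sc f"
  shows "f x 0 = 0" "f 0 y = 0"
proof -
  interpret vector_space sc by (rule assms(1))
  have "f x 0 = f x 0 + f x 0" using bilD(2)[OF assms(2), of x 0 0] by simp
  then show "f x 0 = 0" by simp
  have "f 0 y = f 0 y + f 0 y" using bilD(1)[OF assms(2), of 0 0 y] by simp
  then show "f 0 y = 0" by simp
qed

lemma bil_lsum_right:
  assumes "vector_space sc" "bil s1 s2 sc f"
  shows "f x (lsum g t) = lsum (\<lambda>a b. f x (g a b)) t"
  by (induct t) (auto simp: bil_zero[OF assms] bilD[OF assms(2)])

lemma bil_lsum_left:
  assumes "vector_space sc" "bil s1 s2 sc f"
  shows "f (lsum g t) y = lsum (\<lambda>a b. f (g a b) y) t"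
  by (induct t) (auto simp: bil_zero[OF assms] bilD[OF assms(2)])

lemmas teq2_trans_calc[trans] = teq2_trans

locale hopf =
  fixes sK :: "'k::field \<Rightarrow> 'a::ring_1 \<Rightarrow> 'a" and \<Delta> :: "'a \<Rightarrow> ('a \<times> 'a) list"
    and \<epsilon> :: "'a \<Rightarrow> 'k" and S :: "'a \<Rightarrow> 'a"
  assumes H: "hopf_algebra sK \<Delta> \<epsilon> S"
begin

lemma kalgebra: "k_algebra sK" using H by (simp add: hopf_algebra_def)
lemma vsK: "vector_space sK" using kalgebra by (simp add: k_algebra_def)

sublocale vector_space sK by (rule vsK)

lemma sK_mult_left[simp]: "sK c x * y = sK c (x * y)"
  using kalgebra by (simp add: k_algebra_def)
lemma sK_mult_right[simp]: "x * sK c y = sK c (x * y)"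
  using kalgebra by (simp add: k_algebra_def)

lemma Dadd: "teq2 sK sK (\<Delta> (x + y)) (\<Delta> x @ \<Delta> y)" using H by (simp add: hopf_algebra_def)
lemma Dsc: "teq2 sK sK (\<Delta> (sK c x)) (lsc sK c (\<Delta> x))" using H by (simp add: hopf_algebra_def lsc_def)
lemma Dmul: "teq2 sK sK (\<Delta> (x * y)) (tmul (\<Delta> x) (\<Delta> y))" using H by (simp add: hopf_algebra_def)
lemma Done: "teq2 sK sK (\<Delta> 1) [(1, 1)]" using H by (simp add: hopf_algebra_def)
lemma coass: "teq3 sK sK sK (left_apply \<Delta> (\<Delta> x)) (right_apply \<Delta> (\<Delta> x))"
  using H by (simp add: hopf_algebra_def)
lemma lin_eps: "Vector_Spaces.linear sK (*) \<epsilon>" using H by (simp add: hopf_algebra_def)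
lemma eps_mult[simp]: "\<epsilon> (x * y) = \<epsilon> x * \<epsilon> y" using H by (simp add: hopf_algebra_def)
lemma eps_one[simp]: "\<epsilon> 1 = 1" using H by (simp add: hopf_algebra_def)
lemma counitL: "lsum (\<lambda>u v. sK (\<epsilon> u) v) (\<Delta> x) = x" using H by (simp add: hopf_algebra_def lsum_def)
lemma counitR: "lsum (\<lambda>u v. sK (\<epsilon> v) u) (\<Delta> x) = x" using H by (simp add: hopf_algebra_def lsum_def)
lemma lin_S: "Vector_Spaces.linear sK sK S" using H by (simp add: hopf_algebra_def)
lemma antiL: "lsum (\<lambda>u v. S u * v) (\<Delta> x) = sK (\<epsilon> x) 1" using H by (simp add: hopf_algebra_def lsum_def)
lemma antiR: "lsum (\<lambda>u v. u * S v) (\<Delta> x) = sK (\<epsilon> x) 1" using H by (simp add: hopf_algebra_def lsum_def)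

lemma S_add[simp]: "S (x + y) = S x + S y" using lin_S by (simp add: Vector_Spaces.linear_iff)
lemma S_sc[simp]: "S (sK c x) = sK c (S x)" using lin_S by (simp add: Vector_Spaces.linear_iff)
lemma S_zero[simp]: "S 0 = 0" by (metis add_cancel_right_right S_add)
lemma eps_add[simp]: "\<epsilon> (x + y) = \<epsilon> x + \<epsilon> y" using lin_eps by (simp add: Vector_Spaces.linear_iff)
lemma eps_sc[simp]: "\<epsilon> (sK c x) = c * \<epsilon> x" using lin_eps by (simp add: Vector_Spaces.linear_iff)
lemma eps_zero[simp]: "\<epsilon> 0 = 0" by (metis add_cancel_right_right eps_add)

lemma lsum_sK: "lsum (\<lambda>x y. sK c (f x y)) t = sK c (lsum f t)"
  by (rule lsum_scale_fun[OF vsK])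
lemma lsum_kk: "lsum (\<lambda>x y. c * f x y) t = c * (lsum f t :: 'k)"
  by (rule lsum_scale_fun[OF vs_field])

abbreviation "bilK \<equiv> bil sK sK sK"
abbreviation "bilk \<equiv> bil sK sK ((*) :: 'k \<Rightarrow> 'k \<Rightarrow> 'k)"

lemma L_add:
  assumes "vector_space sc" "bil sK sK sc \<beta>"
  shows "lsum \<beta> (\<Delta> (x + y)) = lsum \<beta> (\<Delta> x) + lsum \<beta> (\<Delta> y)"
  using teq2_eval[OF assms(1) Dadd assms(2)] by simp
lemma L_sc:
  assumes "vector_space sc" "bil sK sK sc \<beta>"
  shows "lsum \<beta> (\<Delta> (sK c x)) = sc c (lsum \<beta> (\<Delta> x))"
  using teq2_eval[OF assms(1) Dsc assms(2)] lsum_lsc[OF assms] by simp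
lemma L_mul:
  assumes "vector_space sc" "bil sK sK sc \<beta>"
  shows "lsum \<beta> (\<Delta> (x * y)) = lsum (\<lambda>a b. lsum (\<lambda>c d. \<beta> (a * c) (b * d)) (\<Delta> y)) (\<Delta> x)"
  using teq2_eval[OF assms(1) Dmul assms(2)] lsum_tmul by metis
lemma L_one:
  assumes "vector_space sc" "bil sK sK sc \<beta>"
  shows "lsum \<beta> (\<Delta> 1) = \<beta> 1 1"
  using teq2_eval[OF assms(1) Done assms(2)] by simp
lemma L_coass:
  assumes "vector_space sc" "tril sK sK sK sc h"
  shows "lsum (\<lambda>u v. lsum (\<lambda>p q. h p q v) (\<Delta> u)) (\<Delta> x) = lsum (\<lambda>u v. lsum (\<lambda>p q. h u p q) (\<Delta> v)) (\<Delta> x)"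
  using teq3_eval[OF assms(1) coass assms(2)] lsum3_left_apply lsum3_right_apply by metis

lemmas LK_add = L_add[OF vsK] and Lk_add = L_add[OF vs_field]
lemmas LK_sc = L_sc[OF vsK] and Lk_sc = L_sc[OF vs_field]
lemmas LK_mul = L_mul[OF vsK] and Lk_mul = L_mul[OF vs_field]
lemmas LK_one = L_one[OF vsK] and Lk_one = L_one[OF vs_field]
lemmas LK_coass = L_coass[OF vsK] and Lk_coass = L_coass[OF vs_field]


definition cv :: "('a \<Rightarrow> 'a \<Rightarrow> 'a) \<Rightarrow> ('a \<Rightarrow> 'a \<Rightarrow> 'a) \<Rightarrow> 'a \<Rightarrow> 'a \<Rightarrow> 'a" where
  "cv f g x y = lsum (\<lambda>x1 x2. lsum (\<lambda>y1 y2. f x1 y1 * g x2 y2) (\<Delta> y)) (\<Delta> x)"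

lemma cv_bil:
  assumes f: "bilK f" and g: "bilK g"
  shows "bilK (cv f g)"
proof -
  have b1: "bilK (\<lambda>y1 y2. f x1 y1 * g x2 y2)" for x1 x2
    unfolding bil_def by (simp add: bilD[OF f] bilD[OF g] distrib_left distrib_right)
  have b2: "bilK (\<lambda>x1 x2. lsum (\<lambda>y1 y2. f x1 y1 * g x2 y2) (\<Delta> y))" for y
    unfolding bil_def by (simp add: bilD[OF f] bilD[OF g] distrib_left distrib_right lsum_add_fun lsum_sK)
  show ?thesis
    unfolding bil_def cv_def
    by (simp add: LK_add[OF b2] LK_sc[OF b2] LK_add[OF b1] LK_sc[OF b1] lsum_add_fun lsum_sK)
qed


lemma cv_assoc:
  assumes f: "bilK f" and g: "bilK g" and h: "bilK h"
  shows "cv (cv f g) h x y = cv f (cv g h) x y"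
proof -
  define Hx where "Hx p q r = lsum (\<lambda>y1 y2. lsum (\<lambda>y11 y12. f p y11 * g q y12 * h r y2) (\<Delta> y1)) (\<Delta> y)" for p q r
  define G where "G u p q a b c = f u a * g p b * h q c" for u p q a b c
  have trG: "tril sK sK sK sK (G u p q)" for u p q
    unfolding tril_def G_def by (simp add: bilD[OF f] bilD[OF g] bilD[OF h] distrib_left distrib_right)
  have b1: "bilK (\<lambda>y11 y12. f p y11 * g q y12 * h r y2)" for p q r y2
    unfolding bil_def by (simp add: bilD[OF f] bilD[OF g] bilD[OF h] distrib_left distrib_right)
  have trH: "tril sK sK sK sK Hx"
    unfolding tril_def Hx_def
    by (simp add: bilD[OF f] bilD[OF g] bilD[OF h] distrib_left distrib_right lsum_add_fun lsum_sK)
  have HxG: "Hx u p q = lsum (\<lambda>y1 y2. lsum (\<lambda>a b. G u p q y1 a b) (\<Delta> y2)) (\<Delta> y)" for u p q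
    unfolding Hx_def using LK_coass[OF trG[of u p q], of y] by (simp add: G_def)
  have "cv (cv f g) h x y = lsum (\<lambda>x1 x2. lsum (\<lambda>x11 x12. Hx x11 x12 x2) (\<Delta> x1)) (\<Delta> x)"
    unfolding cv_def Hx_def
    apply (rule lsum_cong)
    apply (simp add: lsum_mult_right)
    apply (rule lsum_swap)
    done
  also have "\<dots> = lsum (\<lambda>u v. lsum (\<lambda>p q. Hx u p q) (\<Delta> v)) (\<Delta> x)"
    by (rule LK_coass[OF trH])
  also have "\<dots> = cv f (cv g h) x y"
    unfolding cv_def HxG G_def
    apply (rule lsum_cong)
    apply (simp add: lsum_mult_left mult.assoc)
    apply (rule lsum_swap)
    done
  finally show ?thesis .
qed


definition uu :: "'a \<Rightarrow> 'a \<Rightarrow> 'a" where "uu x y = sK (\<epsilon> x * \<epsilon> y) 1"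

lemma uu_bil: "bilK uu"
  unfolding bil_def uu_def by (simp add: algebra_simps scale_left_distrib)

lemma cv_unit_right:
  assumes f: "bilK f"
  shows "cv f uu x y = f x y"
proof -
  have "cv f uu x y = lsum (\<lambda>x1 x2. sK (\<epsilon> x2) (lsum (\<lambda>y1 y2. sK (\<epsilon> y2) (f x1 y1)) (\<Delta> y))) (\<Delta> x)"
    unfolding cv_def uu_def by (simp add: lsum_sK[symmetric])
  also have "\<dots> = lsum (\<lambda>x1 x2. sK (\<epsilon> x2) (f x1 y)) (\<Delta> x)"
  proof -
    have "f a (lsum (\<lambda>y1 y2. sK (\<epsilon> y2) y1) (\<Delta> y)) = lsum (\<lambda>y1 y2. sK (\<epsilon> y2) (f a y1)) (\<Delta> y)" for a
      by (simp add: bil_lsum_right[OF vsK f] bilD[OF f])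
    then show ?thesis by (simp add: counitR)
  qed
  also have "\<dots> = f x y"
  proof -
    have "f (lsum (\<lambda>y1 y2. sK (\<epsilon> y2) y1) (\<Delta> x)) y = lsum (\<lambda>y1 y2. sK (\<epsilon> y2) (f y1 y)) (\<Delta> x)"
      by (simp add: bil_lsum_left[OF vsK f] bilD[OF f])
    then show ?thesis by (simp add: counitR)
  qed
  finally show ?thesis .
qed

lemma cv_unit_left:
  assumes f: "bilK f"
  shows "cv uu f x y = f x y"
proof -
  have "cv uu f x y = lsum (\<lambda>x1 x2. sK (\<epsilon> x1) (lsum (\<lambda>y1 y2. sK (\<epsilon> y1) (f x2 y2)) (\<Delta> y))) (\<Delta> x)"
    unfolding cv_def uu_def by (simp add: lsum_sK[symmetric])
  also have "\<dots> = lsum (\<lambda>x1 x2. sK (\<epsilon> x1) (f x2 y)) (\<Delta> x)"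
  proof -
    have "f a (lsum (\<lambda>y1 y2. sK (\<epsilon> y1) y2) (\<Delta> y)) = lsum (\<lambda>y1 y2. sK (\<epsilon> y1) (f a y2)) (\<Delta> y)" for a
      by (simp add: bil_lsum_right[OF vsK f] bilD[OF f])
    then show ?thesis by (simp add: counitL)
  qed
  also have "\<dots> = f x y"
  proof -
    have "f (lsum (\<lambda>y1 y2. sK (\<epsilon> y1) y2) (\<Delta> x)) y = lsum (\<lambda>y1 y2. sK (\<epsilon> y1) (f y2 y)) (\<Delta> x)"
      by (simp add: bil_lsum_left[OF vsK f] bilD[OF f])
    then show ?thesis by (simp add: counitL)
  qed
  finally show ?thesis .
qed

lemma S_one[simp]: "S 1 = 1"
proof -
  have b: "bilK (\<lambda>u v. S u * v)" unfolding bil_def by (simp add: algebra_simps)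
  show ?thesis using antiL[of 1] LK_one[OF b] by simp
qed

lemma S_antimult: "S (x * y) = S y * S x"
proof -
  define A where "A a b = S (a * b)" for a b
  define m where "m a b = (a * b :: 'a)" for a b
  define B where "B a b = S b * S a" for a b
  have bA: "bilK A" unfolding bil_def A_def by (simp add: algebra_simps)
  have bm: "bilK m" unfolding bil_def m_def by (simp add: algebra_simps)
  have bB: "bilK B" unfolding bil_def B_def by (simp add: algebra_simps)
  have bS: "bilK (\<lambda>u v. S u * v)" unfolding bil_def by (simp add: algebra_simps)
  have bS2: "bilK (\<lambda>u v. u * S v)" unfolding bil_def by (simp add: algebra_simps)
  have Am: "cv A m = uu"
  proof (intro ext)
    fix a b
    show "cv A m a b = uu a b"
      unfolding cv_def A_def m_def uu_def
      using LK_mul[OF bS, of a b] antiL[of "a * b"] by (simp add: mult.assoc)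
  qed
  have mB: "cv m B = uu"
  proof (intro ext)
    fix a b
    have "cv m B a b = lsum (\<lambda>x1 x2. x1 * lsum (\<lambda>y1 y2. y1 * S y2) (\<Delta> b) * S x2) (\<Delta> a)"
      unfolding cv_def m_def B_def by (simp add: lsum_mult_left lsum_mult_right mult.assoc)
    also have "\<dots> = sK (\<epsilon> b) (lsum (\<lambda>x1 x2. x1 * S x2) (\<Delta> a))"
      by (simp add: antiR lsum_sK)
    also have "\<dots> = uu a b" by (simp add: antiR uu_def mult.commute)
    finally show "cv m B a b = uu a b" .
  qed
  have "A x y = cv A uu x y" by (rule cv_unit_right[OF bA, symmetric])
  also have "\<dots> = cv A (cv m B) x y" by (simp add: mB)
  also have "\<dots> = cv (cv A m) B x y" by (rule cv_assoc[OF bA bm bB, symmetric])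
  also have "\<dots> = B x y" by (simp add: Am cv_unit_left[OF bB])
  finally show ?thesis by (simp add: A_def B_def)
qed

lemma eps_S[simp]: "\<epsilon> (S x) = \<epsilon> x"
proof -
  have bS: "bilk (\<lambda>u v. \<epsilon> (S u) * \<epsilon> v)" unfolding bil_def by (simp add: algebra_simps)
  have "\<epsilon> (S x) = \<epsilon> (S (lsum (\<lambda>u v. sK (\<epsilon> v) u) (\<Delta> x)))" by (simp add: counitR)
  also have "\<dots> = lsum (\<lambda>u v. \<epsilon> (S u) * \<epsilon> v) (\<Delta> x)"
    by (simp add: linear_lsum[OF lin_S] linear_lsum[OF lin_eps] mult.commute)
  also have "\<dots> = \<epsilon> (lsum (\<lambda>u v. S u * v) (\<Delta> x))"
    by (simp add: linear_lsum[OF lin_eps])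
  also have "\<dots> = \<epsilon> x" by (simp add: antiL)
  finally show ?thesis .
qed


section \<open>Tensor-valued convolution\<close>

definition lk :: "('a \<Rightarrow> 'k) \<Rightarrow> bool" where
  "lk \<phi> \<longleftrightarrow> (\<forall>x y. \<phi> (x + y) = \<phi> x + \<phi> y) \<and> (\<forall>c x. \<phi> (sK c x) = c * \<phi> x)"

lemma lkD: "lk \<phi> \<Longrightarrow> \<phi> (x + y) = \<phi> x + \<phi> y" "lk \<phi> \<Longrightarrow> \<phi> (sK c x) = c * \<phi> x"
  unfolding lk_def by auto

lemma bilk_iff: "bilk \<beta> \<longleftrightarrow> (\<forall>y. lk (\<lambda>x. \<beta> x y)) \<and> (\<forall>x. lk (\<beta> x))"
  unfolding bil_def lk_def by auto

lemma tril_iff: "tril sK sK sK (*) h \<longleftrightarrow> (\<forall>y z. lk (\<lambda>x. h x y z)) \<and> (\<forall>x z. lk (\<lambda>y. h x y z)) \<and> (\<forall>x y. lk (h x y))"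
  unfolding tril_def lk_def by auto

lemma lk_lsum: "(\<And>a b. lk (\<lambda>x. f x a b)) \<Longrightarrow> lk (\<lambda>x. lsum (f x) t)"
  unfolding lk_def by (induct t) (auto simp: algebra_simps)

lemma lk_Delta: "bilk \<gamma> \<Longrightarrow> lk (\<lambda>x. lsum \<gamma> (\<Delta> x))"
  unfolding lk_def by (simp add: Lk_add Lk_sc)

lemma lk_zero: "lk \<phi> \<Longrightarrow> \<phi> 0 = 0"
  using lkD(2)[of \<phi> 0 0] by simp

lemma lk_lsum_app: "lk \<phi> \<Longrightarrow> \<phi> (lsum f t) = lsum (\<lambda>a b. \<phi> (f a b)) t"
  by (induct t) (auto simp: lk_zero lkD)

definition linT :: "('a \<Rightarrow> ('a \<times> 'a) list) \<Rightarrow> bool" where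
  "linT F \<longleftrightarrow> (\<forall>\<beta>. bilk \<beta> \<longrightarrow> lk (\<lambda>x. lsum \<beta> (F x)))"

lemma bilk_mulpair: "bilk \<beta> \<Longrightarrow> bilk (\<lambda>c d. \<beta> (a * c) (b * d))"
  unfolding bil_def by (simp add: distrib_left)

lemma bilk_mulpair2: "bilk \<beta> \<Longrightarrow> bilk (\<lambda>a b. \<beta> (a * c) (b * d))"
  unfolding bil_def by (simp add: distrib_right)

lemma bilk_lsum_mulpair: "bilk \<beta> \<Longrightarrow> bilk (\<lambda>a b. lsum (\<lambda>c d. \<beta> (a * c) (b * d)) w)"
  unfolding bil_def by (simp add: distrib_right lsum_add_fun lsum_kk)

definition conv2 :: "('a \<Rightarrow> ('a \<times> 'a) list) \<Rightarrow> ('a \<Rightarrow> ('a \<times> 'a) list) \<Rightarrow> 'a \<Rightarrow> ('a \<times> 'a) list" where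
  "conv2 F G x = concat (map (\<lambda>(u, v). tmul (F u) (G v)) (\<Delta> x))"

lemma lsum_conv2: "lsum \<beta> (conv2 F G x) =
   lsum (\<lambda>u v. lsum (\<lambda>a b. lsum (\<lambda>c d. \<beta> (a * c) (b * d)) (G v)) (F u)) (\<Delta> x)"
  unfolding conv2_def by (simp add: lsum_concat lsum_tmul)

lemma conv2_bil:
  assumes F: "linT F" and G: "linT G" and b: "bilk \<beta>"
  shows "bilk (\<lambda>u v. lsum (\<lambda>a b. lsum (\<lambda>c d. \<beta> (a * c) (b * d)) (G v)) (F u))"
  unfolding bilk_iff
proof (intro conjI allI)
  fix v
  show "lk (\<lambda>u. lsum (\<lambda>a b. lsum (\<lambda>c d. \<beta> (a * c) (b * d)) (G v)) (F u))"
    using F bilk_lsum_mulpair[OF b] unfolding linT_def by blast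
next
  fix u
  show "lk (\<lambda>v. lsum (\<lambda>a b. lsum (\<lambda>c d. \<beta> (a * c) (b * d)) (G v)) (F u))"
    by (rule lk_lsum) (use G bilk_mulpair[OF b] in \<open>auto simp: linT_def\<close>)
qed

lemma linT_conv2: "linT F \<Longrightarrow> linT G \<Longrightarrow> linT (conv2 F G)"
  unfolding linT_def[of "conv2 F G"] lsum_conv2
  using lk_Delta conv2_bil by blast

lemma teqK_I: "(\<And>\<beta>. bilk \<beta> \<Longrightarrow> lsum \<beta> t = lsum \<beta> u) \<Longrightarrow> teq2 sK sK t u"
  by (rule teq2_I) auto

lemma teqK_eval: "teq2 sK sK t u \<Longrightarrow> bilk \<beta> \<Longrightarrow> lsum \<beta> t = lsum \<beta> u"
  by (rule teq2_eval_k)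

lemma conv2_assoc:
  assumes F: "linT F" and G: "linT G" and Hh: "linT Hh"
  shows "teq2 sK sK (conv2 (conv2 F G) Hh x) (conv2 F (conv2 G Hh) x)"
proof (rule teqK_I)
  fix \<beta> assume b: "bilk \<beta>"
  define h where "h p q v = lsum (\<lambda>a1 b1. lsum (\<lambda>a2 b2. lsum (\<lambda>c d. \<beta> (a1 * (a2 * c)) (b1 * (b2 * d))) (Hh v)) (G q)) (F p)" for p q v
  have b3: "bilk (\<lambda>c d. \<beta> (a1 * (a2 * c)) (b1 * (b2 * d)))" for a1 a2 b1 b2
    using bilk_mulpair[OF bilk_mulpair[OF b, of a1 b1], of a2 b2] by simp
  have b2: "bilk (\<lambda>a2 b2. lsum (\<lambda>c d. \<beta> (a1 * (a2 * c)) (b1 * (b2 * d))) w)" for a1 b1 w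
    using bilk_lsum_mulpair[OF bilk_mulpair[OF b, of a1 b1], of w] by (simp add: mult.assoc)
  have b1: "bilk (\<lambda>a1 b1. lsum (\<lambda>a2 b2. lsum (\<lambda>c d. \<beta> (a1 * (a2 * c)) (b1 * (b2 * d))) (Hh v)) (G q))" for v q
    unfolding bil_def by (simp add: distrib_right lsum_add_fun lsum_kk bilD[OF b])
  have tr: "tril sK sK sK (*) h"
    unfolding tril_iff
  proof (intro conjI allI)
    fix q v show "lk (\<lambda>p. h p q v)" unfolding h_def using F b1 unfolding linT_def by blast
  next
    fix p v show "lk (\<lambda>q. h p q v)" unfolding h_def
      by (rule lk_lsum) (use G b2 in \<open>auto simp: linT_def\<close>)
  next
    fix p q show "lk (h p q)" unfolding h_def
      by (rule lk_lsum, rule lk_lsum) (use Hh b3 in \<open>auto simp: linT_def\<close>)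
  qed
  have "lsum \<beta> (conv2 (conv2 F G) Hh x) = lsum (\<lambda>u v. lsum (\<lambda>p q. h p q v) (\<Delta> u)) (\<Delta> x)"
    unfolding lsum_conv2[of \<beta>] lsum_conv2[of "\<lambda>a b. lsum (\<lambda>c d. \<beta> (a * c) (b * d)) (Hh _)"] h_def
    by (simp add: mult.assoc)
  also have "\<dots> = lsum (\<lambda>u v. lsum (\<lambda>p q. h u p q) (\<Delta> v)) (\<Delta> x)"
    by (rule Lk_coass[OF tr])
  also have "\<dots> = lsum \<beta> (conv2 F (conv2 G Hh) x)"
    unfolding lsum_conv2[of \<beta>] lsum_conv2[of "\<lambda>c d. \<beta> (_ * c) (_ * d)"] h_def
    apply (rule lsum_cong)
    apply (rule lsum_swap)
    done
  finally show "lsum \<beta> (conv2 (conv2 F G) Hh x) = lsum \<beta> (conv2 F (conv2 G Hh) x)" .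
qed


lemma conv2_cong_right:
  assumes "\<And>y. teq2 sK sK (G y) (G' y)"
  shows "teq2 sK sK (conv2 F G x) (conv2 F G' x)"
proof (rule teqK_I)
  fix \<beta> assume b: "bilk \<beta>"
  show "lsum \<beta> (conv2 F G x) = lsum \<beta> (conv2 F G' x)"
    unfolding lsum_conv2 using teqK_eval[OF assms bilk_mulpair[OF b]] by simp
qed

lemma conv2_cong_left:
  assumes "\<And>y. teq2 sK sK (F y) (F' y)"
  shows "teq2 sK sK (conv2 F G x) (conv2 F' G x)"
proof (rule teqK_I)
  fix \<beta> assume b: "bilk \<beta>"
  show "lsum \<beta> (conv2 F G x) = lsum \<beta> (conv2 F' G x)"
    unfolding lsum_conv2 using teqK_eval[OF assms bilk_lsum_mulpair[OF b]] by simp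
qed

definition ee :: "'a \<Rightarrow> ('a \<times> 'a) list" where "ee x = [(sK (\<epsilon> x) 1, 1)]"

lemma lsum_ee: "bilk \<beta> \<Longrightarrow> lsum \<beta> (ee x) = \<epsilon> x * \<beta> 1 1"
  by (simp add: ee_def bilD)

lemma linT_ee: "linT ee"
  unfolding linT_def lk_def by (simp add: lsum_ee algebra_simps)

lemma linT_Delta: "linT \<Delta>"
  unfolding linT_def using lk_Delta by blast

lemma conv2_unit_right:
  assumes F: "linT F"
  shows "teq2 sK sK (conv2 F ee x) (F x)"
proof (rule teqK_I)
  fix \<beta> assume b: "bilk \<beta>"
  have l: "lk (\<lambda>x. lsum \<beta> (F x))" using F b unfolding linT_def by blast
  have "lsum \<beta> (conv2 F ee x) = lsum (\<lambda>u v. \<epsilon> v * lsum \<beta> (F u)) (\<Delta> x)"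
    unfolding lsum_conv2 ee_def by (simp add: bilD[OF b] lsum_kk)
  also have "\<dots> = lsum (\<lambda>u v. lsum \<beta> (F (sK (\<epsilon> v) u))) (\<Delta> x)"
    by (simp add: lkD[OF l])
  also have "\<dots> = lsum \<beta> (F (lsum (\<lambda>u v. sK (\<epsilon> v) u) (\<Delta> x)))"
    by (simp add: lk_lsum_app[OF l])
  also have "\<dots> = lsum \<beta> (F x)" by (simp add: counitR)
  finally show "lsum \<beta> (conv2 F ee x) = lsum \<beta> (F x)" .
qed

lemma conv2_unit_left:
  assumes F: "linT F"
  shows "teq2 sK sK (conv2 ee F x) (F x)"
proof (rule teqK_I)
  fix \<beta> assume b: "bilk \<beta>"
  have l: "lk (\<lambda>x. lsum \<beta> (F x))" using F b unfolding linT_def by blast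
  have "lsum \<beta> (conv2 ee F x) = lsum (\<lambda>u v. \<epsilon> u * lsum \<beta> (F v)) (\<Delta> x)"
    unfolding lsum_conv2 ee_def by (simp add: bilD[OF b] lsum_kk)
  also have "\<dots> = lsum (\<lambda>u v. lsum \<beta> (F (sK (\<epsilon> u) v))) (\<Delta> x)"
    by (simp add: lkD[OF l])
  also have "\<dots> = lsum \<beta> (F (lsum (\<lambda>u v. sK (\<epsilon> u) v) (\<Delta> x)))"
    by (simp add: lk_lsum_app[OF l])
  also have "\<dots> = lsum \<beta> (F x)" by (simp add: counitL)
  finally show "lsum \<beta> (conv2 ee F x) = lsum \<beta> (F x)" .
qed

definition Bm :: "'a \<Rightarrow> ('a \<times> 'a) list" where
  "Bm x = map (\<lambda>(u, v). (S v, S u)) (\<Delta> x)"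

lemma lsum_Bm: "lsum \<beta> (Bm x) = lsum (\<lambda>u v. \<beta> (S v) (S u)) (\<Delta> x)"
  unfolding Bm_def by (simp add: lsum_map)

lemma linT_Bm: "linT Bm"
  unfolding linT_def lsum_Bm
proof (intro allI impI)
  fix \<beta> assume b: "bilk \<beta>"
  have "bilk (\<lambda>u v. \<beta> (S v) (S u))" unfolding bil_def by (simp add: bilD[OF b])
  then show "lk (\<lambda>x. lsum (\<lambda>u v. \<beta> (S v) (S u)) (\<Delta> x))" by (rule lk_Delta)
qed

definition AS :: "'a \<Rightarrow> ('a \<times> 'a) list" where "AS x = \<Delta> (S x)"

lemma linT_AS: "linT AS"
  unfolding linT_def AS_def lk_def
  by (auto simp: Lk_add Lk_sc)

lemma conv2_AS_Delta: "teq2 sK sK (conv2 AS \<Delta> x) (ee x)"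
proof (rule teqK_I)
  fix \<beta> assume b: "bilk \<beta>"
  have l: "lk (\<lambda>z. lsum \<beta> (\<Delta> z))" by (rule lk_Delta[OF b])
  have "lsum \<beta> (conv2 AS \<Delta> x) = lsum (\<lambda>u v. lsum \<beta> (\<Delta> (S u * v))) (\<Delta> x)"
    unfolding lsum_conv2 AS_def by (simp add: Lk_mul[OF b])
  also have "\<dots> = lsum \<beta> (\<Delta> (lsum (\<lambda>u v. S u * v) (\<Delta> x)))"
    by (simp add: lk_lsum_app[OF l])
  also have "\<dots> = lsum \<beta> (ee x)"
    by (simp add: antiL Lk_sc[OF b] Lk_one[OF b] lsum_ee[OF b])
  finally show "lsum \<beta> (conv2 AS \<Delta> x) = lsum \<beta> (ee x)" .
qed

lemma conv2_Delta_Bm: "teq2 sK sK (conv2 \<Delta> Bm x) (ee x)"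
proof (rule teqK_I)
  fix \<beta> assume b: "bilk \<beta>"
  define \<Phi> where "\<Phi> a b v = lsum (\<lambda>c d. \<beta> (a * S d) (b * S c)) (\<Delta> v)" for a b v
  have trP: "tril sK sK sK (*) \<Phi>"
    unfolding tril_def \<Phi>_def by (simp add: bilD[OF b] distrib_left distrib_right Lk_add Lk_sc bil_def lsum_add_fun lsum_kk)
  have inner: "lsum (\<lambda>p q. \<Phi> x1 p q) (\<Delta> v) = \<beta> (x1 * S v) 1" for x1 v
  proof -
    define h where "h p c d = \<beta> (x1 * S d) (p * S c)" for p c d
    have trh: "tril sK sK sK (*) h" unfolding tril_def h_def by (simp add: bilD[OF b] distrib_left distrib_right)
    have l2: "lk (\<lambda>z. \<beta> (x1 * S z) 1)" unfolding lk_def by (simp add: bilD[OF b] distrib_left)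
    have "lsum (\<lambda>p q. \<Phi> x1 p q) (\<Delta> v) = lsum (\<lambda>p q. lsum (\<lambda>c d. h p c d) (\<Delta> q)) (\<Delta> v)"
      unfolding \<Phi>_def h_def by simp
    also have "\<dots> = lsum (\<lambda>r d. lsum (\<lambda>p c. h p c d) (\<Delta> r)) (\<Delta> v)"
      by (rule Lk_coass[OF trh, symmetric])
    also have "\<dots> = lsum (\<lambda>r d. \<beta> (x1 * S d) (lsum (\<lambda>p c. p * S c) (\<Delta> r))) (\<Delta> v)"
      unfolding h_def by (simp add: bil_lsum_right[OF vs_field b])
    also have "\<dots> = lsum (\<lambda>r d. \<beta> (x1 * S (sK (\<epsilon> r) d)) 1) (\<Delta> v)"
      by (simp add: antiR bilD[OF b])
    also have "\<dots> = \<beta> (x1 * S (lsum (\<lambda>r d. sK (\<epsilon> r) d) (\<Delta> v))) 1"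
      by (simp add: lk_lsum_app[OF l2])
    also have "\<dots> = \<beta> (x1 * S v) 1" by (simp add: counitL)
    finally show ?thesis .
  qed
  have l3: "lk (\<lambda>z. \<beta> z 1)" unfolding lk_def by (simp add: bilD[OF b])
  have "lsum \<beta> (conv2 \<Delta> Bm x) = lsum (\<lambda>u v. lsum (\<lambda>a b. \<Phi> a b v) (\<Delta> u)) (\<Delta> x)"
    unfolding lsum_conv2 lsum_Bm \<Phi>_def by simp
  also have "\<dots> = lsum (\<lambda>u v. lsum (\<lambda>p q. \<Phi> u p q) (\<Delta> v)) (\<Delta> x)"
    by (rule Lk_coass[OF trP])
  also have "\<dots> = lsum (\<lambda>u v. \<beta> (u * S v) 1) (\<Delta> x)"
    by (simp add: inner)
  also have "\<dots> = \<beta> (lsum (\<lambda>u v. u * S v) (\<Delta> x)) 1"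
    by (simp add: lk_lsum_app[OF l3])
  also have "\<dots> = lsum \<beta> (ee x)" by (simp add: antiR lsum_ee[OF b] bilD[OF b])
  finally show "lsum \<beta> (conv2 \<Delta> Bm x) = lsum \<beta> (ee x)" .
qed

lemma S_anticomult: "teq2 sK sK (\<Delta> (S x)) (map (\<lambda>(u, v). (S v, S u)) (\<Delta> x))"
proof -
  have "teq2 sK sK (AS x) (conv2 AS ee x)" by (rule teq2_sym[OF conv2_unit_right[OF linT_AS]])
  also have "teq2 sK sK \<dots> (conv2 AS (conv2 \<Delta> Bm) x)"
    by (rule conv2_cong_right, rule teq2_sym, rule conv2_Delta_Bm)
  also have "teq2 sK sK \<dots> (conv2 (conv2 AS \<Delta>) Bm x)"
    by (rule teq2_sym, rule conv2_assoc[OF linT_AS linT_Delta linT_Bm])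
  also have "teq2 sK sK \<dots> (conv2 ee Bm x)"
    by (rule conv2_cong_left, rule conv2_AS_Delta)
  also have "teq2 sK sK \<dots> (Bm x)" by (rule conv2_unit_left[OF linT_Bm])
  finally show ?thesis by (simp add: AS_def Bm_def)
qed


lemma L_S: "bilk \<beta> \<Longrightarrow> lsum \<beta> (\<Delta> (S x)) = lsum (\<lambda>u v. \<beta> (S v) (S u)) (\<Delta> x)"
  using teqK_eval[OF S_anticomult] by (simp add: lsum_map)

lemma L_SS: "bilk \<beta> \<Longrightarrow> lsum \<beta> (\<Delta> (S (S x))) = lsum (\<lambda>u v. \<beta> (S (S u)) (S (S v))) (\<Delta> x)"
proof -
  assume b: "bilk \<beta>"
  have b2: "bilk (\<lambda>u v. \<beta> (S v) (S u))" unfolding bil_def by (simp add: bilD[OF b])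
  show ?thesis by (simp add: L_S[OF b] L_S[OF b2])
qed

definition grouplike :: "'a \<Rightarrow> bool" where
  "grouplike g \<longleftrightarrow> teq2 sK sK (\<Delta> g) [(g, g)] \<and> \<epsilon> g = 1"

lemma gl_L: "grouplike g \<Longrightarrow> vector_space sc \<Longrightarrow> bil sK sK sc \<beta> \<Longrightarrow> lsum \<beta> (\<Delta> g) = \<beta> g g"
  unfolding grouplike_def using teq2_eval by fastforce

lemma gl_inv: assumes "grouplike g" shows "g * S g = 1" "S g * g = 1"
proof -
  have b1: "bilK (\<lambda>u v. u * S v)" and b2: "bilK (\<lambda>u v. S u * v)" unfolding bil_def by (simp_all add: algebra_simps)
  show "g * S g = 1" using antiR[of g] gl_L[OF assms vsK b1] assms by (simp add: grouplike_def)
  show "S g * g = 1" using antiL[of g] gl_L[OF assms vsK b2] assms by (simp add: grouplike_def)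
qed

lemma gl_S: assumes "grouplike g" shows "grouplike (S g)"
  unfolding grouplike_def
proof
  show "teq2 sK sK (\<Delta> (S g)) [(S g, S g)]"
  proof (rule teqK_I)
    fix \<beta> assume b: "bilk \<beta>"
    have b2: "bilk (\<lambda>u v. \<beta> (S v) (S u))" unfolding bil_def by (simp add: bilD[OF b])
    show "lsum \<beta> (\<Delta> (S g)) = lsum \<beta> [(S g, S g)]"
      by (simp add: L_S[OF b] gl_L[OF assms vs_field b2])
  qed
  show "\<epsilon> (S g) = 1" using assms by (simp add: grouplike_def)
qed

lemma inv_unique: "(a::'a) * b = 1 \<Longrightarrow> c * a = 1 \<Longrightarrow> b = c"
  by (metis mult.assoc mult_1_left mult_1_right)

lemma gl_SS: assumes "grouplike g" shows "S (S g) = g"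
  using inv_unique[OF gl_inv(1)[OF gl_S[OF assms]] gl_inv(1)[OF assms]] .

lemma ring_inv_gl: assumes "grouplike g" shows "ring_inv g = S g"
  unfolding ring_inv_def
proof (rule the_equality)
  show "g * S g = 1 \<and> S g * g = 1" using gl_inv[OF assms] by simp
  fix y assume "g * y = 1 \<and> y * g = 1"
  then show "y = S g" using inv_unique[of g y "S g"] gl_inv[OF assms] by simp
qed

lemma conj_endo:
  assumes g: "grouplike g"
  shows "hopf_endo sK \<Delta> \<epsilon> S (\<lambda>x. S g * S (S x) * g)"
  unfolding hopf_endo_def
proof (intro conjI allI)
  show "Vector_Spaces.linear sK sK (\<lambda>x. S g * S (S x) * g)"
    unfolding Vector_Spaces.linear_iff using vsK by (simp add: algebra_simps)
next
  fix x y
  have "S g * S (S x) * g * (S g * S (S y) * g) = S g * S (S x) * (g * S g) * S (S y) * g"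
    by (simp add: mult.assoc)
  then show "S g * S (S (x * y)) * g = S g * S (S x) * g * (S g * S (S y) * g)"
    by (simp add: gl_inv[OF g] S_antimult mult.assoc)
next
  show "S g * S (S 1) * g = 1" by (simp add: gl_inv[OF g])
next
  fix x
  show "teq2 sK sK (\<Delta> (S g * S (S x) * g)) (map (\<lambda>(u, v). (S g * S (S u) * g, S g * S (S v) * g)) (\<Delta> x))"
  proof (rule teqK_I)
    fix \<beta> assume b: "bilk \<beta>"
    have "lsum \<beta> (\<Delta> (S g * S (S x) * g)) = lsum (\<lambda>a b. lsum (\<lambda>c d. \<beta> (a * c) (b * d)) (\<Delta> g)) (\<Delta> (S g * S (S x)))"
      by (rule Lk_mul[OF b])
    also have "\<dots> = lsum (\<lambda>a b. \<beta> (a * g) (b * g)) (\<Delta> (S g * S (S x)))"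
      by (rule lsum_cong) (rule gl_L[OF g vs_field bilk_mulpair[OF b]])
    also have "\<dots> = lsum (\<lambda>a b. lsum (\<lambda>c d. \<beta> (a * c * g) (b * d * g)) (\<Delta> (S (S x)))) (\<Delta> (S g))"
      by (rule Lk_mul[OF bilk_mulpair2[OF b]])
    also have "\<dots> = lsum (\<lambda>c d. \<beta> (S g * c * g) (S g * d * g)) (\<Delta> (S (S x)))"
      by (rule gl_L[OF gl_S[OF g] vs_field bilk_lsum_mulpair[OF bilk_mulpair2[OF b]]])
    also have "\<dots> = lsum (\<lambda>a b. \<beta> (S g * S (S a) * g) (S g * S (S b) * g)) (\<Delta> x)"
      by (rule L_SS) (simp add: bil_def bilD[OF b] distrib_left distrib_right)
    finally show "lsum \<beta> (\<Delta> (S g * S (S x) * g)) = lsum \<beta> (map (\<lambda>(u, v). (S g * S (S u) * g, S g * S (S v) * g)) (\<Delta> x))"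
      by (simp add: lsum_map)
  qed
next
  fix x
  show "\<epsilon> (S g * S (S x) * g) = \<epsilon> x" using g by (simp add: grouplike_def)
next
  fix x
  show "S (S g * S (S x) * g) = S g * S (S (S x)) * g"
    by (simp add: S_antimult gl_SS[OF g] mult.assoc)
qed

end




lemma sum_list_upt_sum: "sum_list (map f [0..<n]) = (\<Sum>s<n. f s)"
  by (induct n) auto

locale ctx = hopf sK \<Delta> \<epsilon> S
  for sK :: "'k::field \<Rightarrow> 'a::ring_1 \<Rightarrow> 'a" and \<Delta> \<epsilon> S +
  fixes sE :: "'k \<Rightarrow> 'e::ring_1 \<Rightarrow> 'e" and Egr :: "nat \<Rightarrow> 'e set"
    and l :: nat and B :: "'e \<Rightarrow> 'e \<Rightarrow> 'k" and \<mu> :: "'e \<Rightarrow> 'e"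
    and \<rho> :: "'e \<Rightarrow> ('a \<times> 'e) list"
    and fe :: 'e and D :: 'a
    and n :: nat and a :: "nat \<Rightarrow> 'e" and \<alpha> :: "nat \<Rightarrow> nat \<Rightarrow> 'k" and y :: "nat \<Rightarrow> nat \<Rightarrow> 'a"
  assumes E_cga: "connected_graded_algebra sE Egr"
    and E_frob: "graded_frobenius sE Egr l B"
    and mu_nak: "nakayama_aut sE Egr B \<mu>"
    and E_comod: "graded_comodule_algebra sK \<Delta> \<epsilon> sE Egr \<rho>"
    and inner_faithful: "inner_faithful_E1 sK \<Delta> S sE Egr \<rho>"
    and fe_l: "fe \<in> Egr l" and fe_nz: "fe \<noteq> 0"
    and codet: "teq2 sK sE (\<rho> fe) [(D, fe)]"
    and a_inj: "inj_on a {..<n}" and a_ind: "\<not> module.dependent sE (a ` {..<n})"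
    and a_span: "module.span sE (a ` {..<n}) = Egr 1"
    and alpha: "\<forall>i<n. \<mu> (a i) = (\<Sum>j<n. sE (\<alpha> i j) (a j))"
    and Ymat: "\<forall>i<n. teq2 sK sE (\<rho> (a i)) (map (\<lambda>s. (y i s, a s)) [0..<n])"
begin

lemma E_kalg: "k_algebra sE" using E_cga by (simp add: connected_graded_algebra_def)
lemma vsE: "vector_space sE" using E_kalg by (simp add: k_algebra_def)

sublocale E: vector_space sE by (rule vsE)

lemma sE_mult_left[simp]: "sE c x * z = sE c (x * z)"
  using E_kalg by (simp add: k_algebra_def)
lemma sE_mult_right[simp]: "x * sE c z = sE c (x * z)"
  using E_kalg by (simp add: k_algebra_def)

lemma Radd: "teq2 sK sE (\<rho> (x + z)) (\<rho> x @ \<rho> z)" using E_comod by (simp add: graded_comodule_algebra_def)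
lemma Rsc: "teq2 sK sE (\<rho> (sE c x)) (lsc sK c (\<rho> x))" using E_comod by (simp add: graded_comodule_algebra_def lsc_def)
lemma Rcoass: "teq3 sK sK sE (left_apply \<Delta> (\<rho> x)) (right_apply \<rho> (\<rho> x))"
  using E_comod by (simp add: graded_comodule_algebra_def)
lemma Rcounit: "lsum (\<lambda>u v. sE (\<epsilon> u) v) (\<rho> x) = x"
  using E_comod by (simp add: graded_comodule_algebra_def lsum_def)
lemma Rmul: "teq2 sK sE (\<rho> (x * z)) (tmul (\<rho> x) (\<rho> z))" using E_comod by (simp add: graded_comodule_algebra_def)
lemma Rgrade: "x \<in> Egr d \<Longrightarrow> \<exists>t. snd ` set t \<subseteq> Egr d \<and> teq2 sK sE (\<rho> x) t"
  using E_comod by (simp add: graded_comodule_algebra_def)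

lemma R_add:
  assumes "vector_space sc" "bil sK sE sc \<beta>"
  shows "lsum \<beta> (\<rho> (x + z)) = lsum \<beta> (\<rho> x) + lsum \<beta> (\<rho> z)"
  using teq2_eval[OF assms(1) Radd assms(2)] by simp
lemma R_sc:
  assumes "vector_space sc" "bil sK sE sc \<beta>"
  shows "lsum \<beta> (\<rho> (sE c x)) = sc c (lsum \<beta> (\<rho> x))"
  using teq2_eval[OF assms(1) Rsc assms(2)] lsum_lsc[OF assms] by simp
lemma R_mul:
  assumes "vector_space sc" "bil sK sE sc \<beta>"
  shows "lsum \<beta> (\<rho> (x * z)) = lsum (\<lambda>p q. lsum (\<lambda>c d. \<beta> (p * c) (q * d)) (\<rho> z)) (\<rho> x)"
  using teq2_eval[OF assms(1) Rmul assms(2)] lsum_tmul by metis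
lemma R_coass:
  assumes "vector_space sc" "tril sK sK sE sc h"
  shows "lsum (\<lambda>u v. lsum (\<lambda>p q. h p q v) (\<Delta> u)) (\<rho> x) = lsum (\<lambda>u v. lsum (\<lambda>p q. h u p q) (\<rho> v)) (\<rho> x)"
  using teq3_eval[OF assms(1) Rcoass assms(2)] lsum3_left_apply lsum3_right_apply by metis
lemma R_a:
  assumes "vector_space sc" "bil sK sE sc \<beta>" "i < n"
  shows "lsum \<beta> (\<rho> (a i)) = (\<Sum>s<n. \<beta> (y i s) (a s))"
proof -
  have "lsum \<beta> (\<rho> (a i)) = lsum \<beta> (map (\<lambda>s. (y i s, a s)) [0..<n])"
    using teq2_eval[OF assms(1) _ assms(2)] Ymat assms(3) by blast
  also have "\<dots> = (\<Sum>s<n. \<beta> (y i s) (a s))"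
    by (simp add: lsum_def o_def sum_list_upt_sum)
  finally show ?thesis .
qed
lemma R_fe:
  assumes "vector_space sc" "bil sK sE sc \<beta>"
  shows "lsum \<beta> (\<rho> fe) = \<beta> D fe"
  using teq2_eval[OF assms(1) codet assms(2)] by simp
lemma R_zero:
  assumes "vector_space sc" "bil sK sE sc \<beta>"
  shows "lsum \<beta> (\<rho> 0) = 0"
proof -
  have m: "module sc" using assms(1) module_iff_vector_space by blast
  show ?thesis using R_sc[OF assms, of 0 0] module.scale_zero_left[OF m] by simp
qed

abbreviation "bilKE \<equiv> bil sK sE ((*) :: 'k \<Rightarrow> 'k \<Rightarrow> 'k)"

lemmas Rk_add = R_add[OF vs_field] and Rk_sc = R_sc[OF vs_field] and Rk_mul = R_mul[OF vs_field]
  and Rk_coass = R_coass[OF vs_field] and Rk_a = R_a[OF vs_field] and Rk_fe = R_fe[OF vs_field]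
  and Rk_zero = R_zero[OF vs_field]
lemmas RK_add = R_add[OF vsK] and RK_sc = R_sc[OF vsK] and RK_mul = R_mul[OF vsK]
  and RK_a = R_a[OF vsK] and RK_fe = R_fe[OF vsK] and RK_zero = R_zero[OF vsK]
lemmas RE_a = R_a[OF vsE] and RE_fe = R_fe[OF vsE]

lemma a_fin: "finite (a ` {..<n})" by simp

lemma a_indep:
  assumes "(\<Sum>j<n. sE (c j) (a j)) = 0" "j < n"
  shows "c j = 0"
proof -
  let ?A = "a ` {..<n}"
  define u where "u v = c (the_inv_into {..<n} a v)" for v
  have "(\<Sum>v\<in>?A. sE (u v) v) = (\<Sum>j<n. sE (u (a j)) (a j))"
    by (rule sum.reindex[OF a_inj, unfolded o_def])
  also have "\<dots> = (\<Sum>j<n. sE (c j) (a j))"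
    by (rule sum.cong) (auto simp: u_def the_inv_into_f_f[OF a_inj])
  finally have z: "(\<Sum>v\<in>?A. sE (u v) v) = 0" using assms(1) by simp
  have "\<forall>v\<in>?A. u v = 0" using a_ind E.dependent_finite[OF a_fin] z by blast
  then have "u (a j) = 0" using assms(2) by blast
  then show ?thesis using assms(2) by (simp add: u_def the_inv_into_f_f[OF a_inj])
qed

lemma crd_ex: "\<exists>\<phi>. Vector_Spaces.linear sE ((*) :: 'k \<Rightarrow> 'k \<Rightarrow> 'k) \<phi> \<and> (\<forall>s<n. \<phi> (a s) = (if s = j then 1 else 0))"
proof -
  interpret p: vector_space_pair sE "(*) :: 'k \<Rightarrow> 'k \<Rightarrow> 'k"
    by unfold_locales (auto simp: algebra_simps)
  have ind: "E.independent (a ` {..<n})" using a_ind by simp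
  obtain g where g: "Vector_Spaces.linear sE (*) g" "\<forall>v\<in>a ` {..<n}. g v = (if j < n \<and> v = a j then 1 else 0)"
    using p.linear_independent_extend[OF ind, of "\<lambda>v. if j < n \<and> v = a j then 1 else 0"] by blast
  show ?thesis
  proof (intro exI conjI allI impI)
    show "Vector_Spaces.linear sE (*) g" by (rule g(1))
    fix s assume s: "s < n"
    show "g (a s) = (if s = j then 1 else 0)"
      using g(2) s a_inj by (auto simp: inj_on_def)
  qed
qed

definition crd :: "nat \<Rightarrow> 'e \<Rightarrow> 'k" where
  "crd j = (SOME \<phi>. Vector_Spaces.linear sE ((*) :: 'k \<Rightarrow> 'k \<Rightarrow> 'k) \<phi> \<and> (\<forall>s<n. \<phi> (a s) = (if s = j then 1 else 0)))"

lemma crd: "Vector_Spaces.linear sE ((*) :: 'k \<Rightarrow> 'k \<Rightarrow> 'k) (crd j)" "s < n \<Longrightarrow> crd j (a s) = (if s = j then 1 else 0)"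
  using someI_ex[OF crd_ex[of j]] unfolding crd_def by auto

lemma crd_add[simp]: "crd j (x + z) = crd j x + crd j z" using crd(1) by (simp add: Vector_Spaces.linear_iff)
lemma crd_sc[simp]: "crd j (sE c x) = c * crd j x" using crd(1) by (simp add: Vector_Spaces.linear_iff)
lemma crd_zero[simp]: "crd j 0 = 0"
  using crd_sc[of j 0 0] by simp
lemma crd_sum: "crd j (\<Sum>s\<in>A. f s) = (\<Sum>s\<in>A. crd j (f s))"
  by (induct A rule: infinite_finite_induct) auto

lemma crd_lincomb: "j < n \<Longrightarrow> crd j (\<Sum>s<n. sE (c s) (a s)) = c j"
  by (simp add: crd_sum crd(2) if_distrib cong: if_cong)

section \<open>Matrix coalgebra\<close>

lemma eps_y: assumes "i < n" "j < n" shows "\<epsilon> (y i j) = (if i = j then 1 else 0)"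
proof -
  have b: "bil sK sE sE (\<lambda>u v. sE (\<epsilon> u) v)" unfolding bil_def by (simp add: algebra_simps E.scale_left_distrib)
  have "(\<Sum>s<n. sE (\<epsilon> (y i s)) (a s)) = a i" using RE_a[OF b assms(1)] Rcounit[of "a i"] by simp
  then have "crd j (\<Sum>s<n. sE (\<epsilon> (y i s)) (a s)) = crd j (a i)" by simp
  then show ?thesis using assms by (simp add: crd_lincomb crd(2))
qed


lemma sum_delta_r: "j < n \<Longrightarrow> (\<Sum>t<n. f t * (if t = j then 1 else 0)) = (f j :: 'b::semiring_1)"
proof -
  assume j: "j < n"
  have "(\<Sum>t<n. f t * (if t = j then 1 else 0)) = (\<Sum>t<n. if t = j then f t else 0)"
    by (rule sum.cong) auto
  also have "\<dots> = f j" using j by (simp add: sum.delta')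
  finally show ?thesis .
qed
lemma sum_delta_l: "j < n \<Longrightarrow> (\<Sum>t<n. (if t = j then 1 else 0) * f t) = (f j :: 'b::semiring_1)"
proof -
  assume j: "j < n"
  have "(\<Sum>t<n. (if t = j then 1 else 0) * f t) = (\<Sum>t<n. if t = j then f t else 0)"
    by (rule sum.cong) auto
  also have "\<dots> = f j" using j by (simp add: sum.delta')
  finally show ?thesis .
qed

lemma Delta_y:
  assumes i: "i < n" and j: "j < n"
  shows "teq2 sK sK (\<Delta> (y i j)) (map (\<lambda>s. (y i s, y s j)) [0..<n])"
proof (rule teqK_I)
  fix \<beta> assume b: "bilk \<beta>"
  define h where "h p q v = \<beta> p q * crd j v" for p q v
  have trh: "tril sK sK sE (*) h" unfolding tril_def h_def by (simp add: bilD[OF b] algebra_simps)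
  have e1: "(\<lambda>u v. lsum (\<lambda>p q. h p q v) (\<Delta> u)) = (\<lambda>u v. lsum \<beta> (\<Delta> u) * crd j v)"
    by (simp add: h_def lsum_mult_right)
  have g1: "bilKE (\<lambda>u v. lsum (\<lambda>p q. h p q v) (\<Delta> u))"
    unfolding e1 bil_def by (simp add: Lk_add[OF b] Lk_sc[OF b] algebra_simps)
  have bh: "bilKE (\<lambda>p q. h u p q)" for u unfolding h_def bil_def by (simp add: bilD[OF b] algebra_simps)
  have g2: "bilKE (\<lambda>u v. lsum (\<lambda>p q. h u p q) (\<rho> v))"
    unfolding bil_def
  proof (intro conjI allI)
    fix x x' v show "lsum (\<lambda>p q. h (x + x') p q) (\<rho> v) = lsum (\<lambda>p q. h x p q) (\<rho> v) + lsum (\<lambda>p q. h x' p q) (\<rho> v)"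
      unfolding h_def by (simp add: bilD[OF b] algebra_simps lsum_add_fun)
  next
    fix x v v' show "lsum (\<lambda>p q. h x p q) (\<rho> (v + v')) = lsum (\<lambda>p q. h x p q) (\<rho> v) + lsum (\<lambda>p q. h x p q) (\<rho> v')"
      by (rule Rk_add[OF bh])
  next
    fix c x v show "lsum (\<lambda>p q. h (sK c x) p q) (\<rho> v) = c * lsum (\<lambda>p q. h x p q) (\<rho> v)"
      unfolding h_def by (simp add: bilD[OF b] lsum_kk[symmetric] mult.assoc)
  next
    fix c x v show "lsum (\<lambda>p q. h x p q) (\<rho> (sE c v)) = c * lsum (\<lambda>p q. h x p q) (\<rho> v)"
      by (rule Rk_sc[OF bh])
  qed
  have "lsum \<beta> (\<Delta> (y i j)) = (\<Sum>s<n. lsum (\<lambda>p q. h p q (a s)) (\<Delta> (y i s)))"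
    unfolding h_def using j by (simp add: crd(2) lsum_mult_right[symmetric] sum_delta_r)
  also have "\<dots> = lsum (\<lambda>u v. lsum (\<lambda>p q. h p q v) (\<Delta> u)) (\<rho> (a i))"
    by (rule Rk_a[OF g1 i, symmetric])
  also have "\<dots> = lsum (\<lambda>u v. lsum (\<lambda>p q. h u p q) (\<rho> v)) (\<rho> (a i))"
    by (rule Rk_coass[OF trh])
  also have "\<dots> = (\<Sum>s<n. lsum (\<lambda>p q. h (y i s) p q) (\<rho> (a s)))"
    by (rule Rk_a[OF g2 i])
  also have "\<dots> = (\<Sum>s<n. \<beta> (y i s) (y s j))"
  proof (rule sum.cong[OF refl])
    fix s assume s: "s \<in> {..<n}"
    show "lsum (\<lambda>p q. h (y i s) p q) (\<rho> (a s)) = \<beta> (y i s) (y s j)"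
    proof -
      have "s < n" using s by simp
      then have "lsum (\<lambda>p q. h (y i s) p q) (\<rho> (a s)) = (\<Sum>t<n. h (y i s) (y s t) (a t))"
        by (rule Rk_a[OF bh])
      then show ?thesis using j by (simp add: h_def crd(2) sum_delta_r)
    qed
  qed
  also have "\<dots> = lsum \<beta> (map (\<lambda>s. (y i s, y s j)) [0..<n])"
    by (simp add: lsum_def o_def sum_list_upt_sum)
  finally show "lsum \<beta> (\<Delta> (y i j)) = lsum \<beta> (map (\<lambda>s. (y i s, y s j)) [0..<n])" .
qed

lemma L_y:
  assumes "vector_space sc" "bil sK sK sc \<beta>" "i < n" "j < n"
  shows "lsum \<beta> (\<Delta> (y i j)) = (\<Sum>s<n. \<beta> (y i s) (y s j))"
  using teq2_eval[OF assms(1) Delta_y[OF assms(3,4)] assms(2)] by (simp add: lsum_def o_def sum_list_upt_sum)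

lemma SY: assumes "i < n" "j < n" shows "(\<Sum>s<n. S (y i s) * y s j) = (if i = j then 1 else 0)"
proof -
  have b: "bilK (\<lambda>u v. S u * v)" unfolding bil_def by (simp add: algebra_simps)
  show ?thesis using L_y[OF vsK b assms] antiL[of "y i j"] eps_y[OF assms] by (cases "i = j") simp_all
qed

lemma YS: assumes "i < n" "j < n" shows "(\<Sum>s<n. y i s * S (y s j)) = (if i = j then 1 else 0)"
proof -
  have b: "bilK (\<lambda>u v. u * S v)" unfolding bil_def by (simp add: algebra_simps)
  show ?thesis using L_y[OF vsK b assms] antiR[of "y i j"] eps_y[OF assms] by (cases "i = j") simp_all
qed

end




context ctx begin

lemma fr_linL: "Vector_Spaces.linear sE (*) (\<lambda>x. B x b)"
  using E_frob unfolding graded_frobenius_def by (elim conjE) (erule allE)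
lemma fr_linR: "Vector_Spaces.linear sE (*) (\<lambda>b. B x b)"
  using E_frob unfolding graded_frobenius_def by (elim conjE) (erule allE)
lemma B_assoc: "B (x * z) w = B x (z * w)"
  using E_frob unfolding graded_frobenius_def by (elim conjE) (erule allE)+
lemma fr_ndL: "\<forall>a. (\<forall>b. B a b = 0) \<longrightarrow> a = 0"
  using E_frob unfolding graded_frobenius_def by (elim conjE) assumption
lemma fr_ndR: "\<forall>b. (\<forall>a. B a b = 0) \<longrightarrow> b = 0"
  using E_frob unfolding graded_frobenius_def by (elim conjE) assumption
lemma fr_grade: "\<forall>i j a b. a \<in> Egr i \<longrightarrow> b \<in> Egr j \<longrightarrow> i + j \<noteq> l \<longrightarrow> B a b = 0"
  using E_frob unfolding graded_frobenius_def by (elim conjE) assumption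

lemma B_addL[simp]: "B (x + x') z = B x z + B x' z" using fr_linL[of z] by (simp add: Vector_Spaces.linear_iff)
lemma B_scL[simp]: "B (sE c x) z = c * B x z" using fr_linL[of z] by (simp add: Vector_Spaces.linear_iff)
lemma B_addR[simp]: "B x (z + z') = B x z + B x z'" using fr_linR[of x] by (simp add: Vector_Spaces.linear_iff)
lemma B_scR[simp]: "B x (sE c z) = c * B x z" using fr_linR[of x] by (simp add: Vector_Spaces.linear_iff)
lemma B_zeroL[simp]: "B 0 z = 0" using B_scL[of 0 0 z] by simp
lemma B_zeroR[simp]: "B x 0 = 0" using B_scR[of x 0 0] by simp
lemma B_ndL: "(\<And>z. B x z = 0) \<Longrightarrow> x = 0" using fr_ndL by blast
lemma B_ndR: "(\<And>x. B x z = 0) \<Longrightarrow> z = 0" using fr_ndR by blast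
lemma B_grade: "x \<in> Egr i \<Longrightarrow> z \<in> Egr j \<Longrightarrow> i + j \<noteq> l \<Longrightarrow> B x z = 0" using fr_grade by blast

lemma B_sumR: "B x (\<Sum>d\<in>F. f d) = (\<Sum>d\<in>F. B x (f d))"
  by (induct F rule: infinite_finite_induct) auto
lemma B_sumL: "B (\<Sum>d\<in>F. f d) z = (\<Sum>d\<in>F. B (f d) z)"
  by (induct F rule: infinite_finite_induct) auto

lemma Egr_sub: "E.subspace (Egr d)" using E_cga by (simp add: connected_graded_algebra_def)
lemma Egr0: "Egr 0 = range (\<lambda>c. sE c 1)" using E_cga by (simp add: connected_graded_algebra_def)
lemma decomp: "\<exists>c. (\<forall>d. c d \<in> Egr d) \<and> finite {d. c d \<noteq> 0} \<and> w = (\<Sum>d\<in>{d. c d \<noteq> 0}. c d)"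
proof -
  have "\<forall>e. \<exists>!c. (\<forall>d. c d \<in> Egr d) \<and> finite {d. c d \<noteq> 0} \<and> e = (\<Sum>d\<in>{d. c d \<noteq> 0}. c d)"
    using E_cga unfolding connected_graded_algebra_def by (elim conjE)
  then show ?thesis by (meson ex1_implies_ex)
qed

definition psi :: "'e \<Rightarrow> 'k" where "psi w = B w 1"

lemma psi_add[simp]: "psi (x + z) = psi x + psi z" by (simp add: psi_def)
lemma psi_sc[simp]: "psi (sE c x) = c * psi x" by (simp add: psi_def)
lemma psi_zero[simp]: "psi 0 = 0" by (simp add: psi_def)
lemma psi_diff: "psi (x - z) = psi x - psi z"
  using psi_add[of "x - z" z] by (simp add: algebra_simps)
lemma psi_sum: "psi (\<Sum>d\<in>F. f d) = (\<Sum>d\<in>F. psi (f d))" by (simp add: psi_def B_sumL)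
lemma B_psi: "B x z = psi (x * z)" by (simp add: psi_def B_assoc)

lemma one_Egr0: "1 \<in> Egr 0" using Egr0 by (metis E.scale_one rangeI)

lemma psi_grade: "x \<in> Egr d \<Longrightarrow> d \<noteq> l \<Longrightarrow> psi x = 0"
  unfolding psi_def using B_grade[OF _ one_Egr0] by simp

lemma top_B:
  assumes x: "x \<in> Egr l" and p: "psi x = 0"
  shows "x = 0"
proof (rule B_ndL)
  fix z
  obtain c where c: "\<forall>d. c d \<in> Egr d" "z = (\<Sum>d\<in>{d. c d \<noteq> 0}. c d)" using decomp[of z] by blast
  have "B x (c d) = 0" for d
  proof (cases "d = 0")
    case True
    then obtain k where "c d = sE k 1" using c(1) Egr0 by (metis rangeE)
    then show ?thesis using p by (simp add: psi_def)
  next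
    case False
    then show ?thesis using B_grade[OF x c(1)[rule_format, of d]] by simp
  qed
  then show "B x z = 0" using c(2) by (simp add: B_sumR)
qed

lemma psi_fe: "psi fe \<noteq> 0" using top_B[OF fe_l] fe_nz by blast

lemma top_1dim:
  assumes x: "x \<in> Egr l"
  shows "x = sE (psi x / psi fe) fe"
proof -
  let ?x' = "x - sE (psi x / psi fe) fe"
  have "?x' \<in> Egr l"
    using Egr_sub[of l] x fe_l by (simp add: E.subspace_diff E.subspace_scale)
  moreover have "psi ?x' = 0" using psi_fe by (simp add: psi_diff)
  ultimately have "?x' = 0" by (rule top_B)
  then show ?thesis by simp
qed

lemma bil_psi: "bil sK sE sK (\<lambda>u v. sK (psi v) u)"
  unfolding bil_def by (simp add: scale_left_distrib scale_right_distrib)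

lemma RK_sum: "bil sK sE sK \<beta> \<Longrightarrow> lsum \<beta> (\<rho> (\<Sum>d\<in>F. f d)) = (\<Sum>d\<in>F. lsum \<beta> (\<rho> (f d)))"
  by (induct F rule: infinite_finite_induct) (auto simp: RK_zero RK_add)

lemma E1: "lsum (\<lambda>u v. sK (psi v) u) (\<rho> w) = sK (psi w) D"
proof -
  obtain c where c: "\<forall>d. c d \<in> Egr d" "w = (\<Sum>d\<in>{d. c d \<noteq> 0}. c d)" using decomp[of w] by blast
  have each: "lsum (\<lambda>u v. sK (psi v) u) (\<rho> (c d)) = sK (psi (c d)) D" for d
  proof (cases "d = l")
    case True
    then have cl: "c d = sE (psi (c d) / psi fe) fe" using top_1dim c(1) by blast
    have "lsum (\<lambda>u v. sK (psi v) u) (\<rho> (sE (psi (c d) / psi fe) fe)) = sK (psi (c d) / psi fe) (sK (psi fe) D)"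
      by (simp add: RK_sc[OF bil_psi] RK_fe[OF bil_psi])
    also have "\<dots> = sK (psi (c d)) D" using psi_fe by simp
    finally show ?thesis using cl by metis
  next
    case False
    obtain t where t: "snd ` set t \<subseteq> Egr d" "teq2 sK sE (\<rho> (c d)) t" using Rgrade c(1) by blast
    have "lsum (\<lambda>u v. sK (psi v) u) (\<rho> (c d)) = lsum (\<lambda>u v. sK (psi v) u) t"
      by (rule teq2_eval[OF vsK t(2) bil_psi])
    also have "\<dots> = 0"
    proof -
      have "lsum (\<lambda>u v. sK (psi v) u) t = lsum (\<lambda>u v. 0) t"
        by (rule lsum_cong) (use t(1) False psi_grade in force)
      then show ?thesis by simp
    qed
    finally show ?thesis using psi_grade[OF c(1)[rule_format] False] by simp
  qed
  have "lsum (\<lambda>u v. sK (psi v) u) (\<rho> w) = (\<Sum>d\<in>{d. c d \<noteq> 0}. sK (psi (c d)) D)"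
    using c(2) by (simp add: RK_sum[OF bil_psi] each)
  also have "\<dots> = sK (psi w) D" using c(2) by (simp add: psi_sum scale_sum_left)
  finally show ?thesis .
qed

lemma psi_mu: "i < n \<Longrightarrow> psi (a i * z) = (\<Sum>j<n. \<alpha> i j * psi (z * a j))"
proof -
  assume i: "i < n"
  have nak: "B x w = B w (\<mu> x)" for x w using mu_nak by (simp add: nakayama_aut_def)
  have "psi (a i * z) = B (a i) z" by (simp add: B_psi)
  also have "\<dots> = B z (\<mu> (a i))" by (rule nak)
  also have "\<dots> = (\<Sum>j<n. \<alpha> i j * psi (z * a j))" using alpha i by (simp add: B_sumR) (simp add: B_psi)
  finally show ?thesis .
qed


lemma lsum_sum: "lsum (\<lambda>p q. \<Sum>s\<in>A. f s p q) t = (\<Sum>s\<in>A. lsum (f s) t)"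
  by (induct t) (auto simp: sum.distrib)

definition P :: "nat \<Rightarrow> 'e \<Rightarrow> 'a" where
  "P j z = lsum (\<lambda>p q. sK (psi (q * a j)) p) (\<rho> z)"

lemma E3: assumes i: "i < n"
  shows "(\<Sum>s<n. P s z * y i s) = sK (psi (z * a i)) D"
proof -
  have b: "bil sK sE sK (\<lambda>c d. sK (psi (q * d)) (p * c))" for p q
    unfolding bil_def by (simp add: distrib_left distrib_right scale_left_distrib scale_right_distrib)
  have "sK (psi (z * a i)) D = lsum (\<lambda>u v. sK (psi v) u) (\<rho> (z * a i))" by (simp add: E1)
  also have "\<dots> = lsum (\<lambda>p q. lsum (\<lambda>c d. sK (psi (q * d)) (p * c)) (\<rho> (a i))) (\<rho> z)"
    by (rule RK_mul[OF bil_psi])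
  also have "\<dots> = lsum (\<lambda>p q. \<Sum>s<n. sK (psi (q * a s)) (p * y i s)) (\<rho> z)"
    by (rule lsum_cong) (simp add: RK_a[OF b i])
  also have "\<dots> = (\<Sum>s<n. P s z * y i s)"
    by (simp add: lsum_sum P_def lsum_mult_right)
  finally show ?thesis by simp
qed

lemma E2: assumes i: "i < n"
  shows "(\<Sum>s<n. y i s * (\<Sum>j<n. sK (\<alpha> s j) (P j z))) = sK (\<Sum>j<n. \<alpha> i j * psi (z * a j)) D"
proof -
  have b: "bil sK sE sK (\<lambda>p q. lsum (\<lambda>c d. sK (psi (q * d)) (p * c)) (\<rho> z))"
    unfolding bil_def by (simp add: distrib_left distrib_right scale_left_distrib scale_right_distrib lsum_add_fun lsum_sK[symmetric] mult.commute)
  have inner: "lsum (\<lambda>c d. sK (psi (a s * d)) c) (\<rho> z) = (\<Sum>j<n. sK (\<alpha> s j) (P j z))" if s: "s < n" for s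
    using s by (simp add: psi_mu scale_sum_left lsum_sum P_def lsum_sK[symmetric])
  have "sK (\<Sum>j<n. \<alpha> i j * psi (z * a j)) D = sK (psi (a i * z)) D" by (simp add: psi_mu i)
  also have "\<dots> = lsum (\<lambda>u v. sK (psi v) u) (\<rho> (a i * z))" by (simp add: E1)
  also have "\<dots> = lsum (\<lambda>p q. lsum (\<lambda>c d. sK (psi (q * d)) (p * c)) (\<rho> z)) (\<rho> (a i))"
    by (rule RK_mul[OF bil_psi])
  also have "\<dots> = (\<Sum>s<n. lsum (\<lambda>c d. sK (psi (a s * d)) (y i s * c)) (\<rho> z))"
    by (rule RK_a[OF b i])
  also have "\<dots> = (\<Sum>s<n. y i s * lsum (\<lambda>c d. sK (psi (a s * d)) c) (\<rho> z))"
    by (simp add: lsum_mult_left)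
  also have "\<dots> = (\<Sum>s<n. y i s * (\<Sum>j<n. sK (\<alpha> s j) (P j z)))"
    by (rule sum.cong) (auto simp: inner)
  finally show ?thesis by simp
qed

section \<open>D is grouplike\<close>

lemma eps_D: "\<epsilon> D = 1"
proof -
  have b: "bil sK sE sE (\<lambda>u v. sE (\<epsilon> u) v)" unfolding bil_def by (simp add: algebra_simps E.scale_left_distrib)
  have "sE (\<epsilon> D) fe = sE 1 fe" using RE_fe[OF b] Rcounit[of fe] by simp
  then show ?thesis using fe_nz E.scale_cancel_right by blast
qed

lemma D_gl: "grouplike D"
  unfolding grouplike_def
proof
  obtain \<phi> where \<phi>: "Vector_Spaces.linear sE ((*) :: 'k \<Rightarrow> 'k \<Rightarrow> 'k) \<phi>" "\<phi> fe = 1"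
    using sep0[OF vsE fe_nz] by blast
  have \<phi>add[simp]: "\<phi> (x + z) = \<phi> x + \<phi> z" and \<phi>sc[simp]: "\<phi> (sE c x) = c * \<phi> x" for x z c
    using \<phi>(1) by (simp_all add: Vector_Spaces.linear_iff)
  show "teq2 sK sK (\<Delta> D) [(D, D)]"
  proof (rule teqK_I)
    fix \<beta> assume b: "bilk \<beta>"
    define h where "h p q v = \<beta> p q * \<phi> v" for p q v
    have trh: "tril sK sK sE (*) h" unfolding tril_def h_def by (simp add: bilD[OF b] algebra_simps)
    have e1: "(\<lambda>u v. lsum (\<lambda>p q. h p q v) (\<Delta> u)) = (\<lambda>u v. lsum \<beta> (\<Delta> u) * \<phi> v)"
      by (simp add: h_def lsum_mult_right)
    have g1: "bilKE (\<lambda>u v. lsum (\<lambda>p q. h p q v) (\<Delta> u))"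
      unfolding e1 bil_def by (simp add: Lk_add[OF b] Lk_sc[OF b] algebra_simps)
    have bh: "bilKE (\<lambda>p q. h u p q)" for u unfolding h_def bil_def by (simp add: bilD[OF b] algebra_simps)
    have g2: "bilKE (\<lambda>u v. lsum (\<lambda>p q. h u p q) (\<rho> v))"
      unfolding bil_def
    proof (intro conjI allI)
      fix x x' v show "lsum (\<lambda>p q. h (x + x') p q) (\<rho> v) = lsum (\<lambda>p q. h x p q) (\<rho> v) + lsum (\<lambda>p q. h x' p q) (\<rho> v)"
        unfolding h_def by (simp add: bilD[OF b] algebra_simps lsum_add_fun)
    next
      fix x v v' show "lsum (\<lambda>p q. h x p q) (\<rho> (v + v')) = lsum (\<lambda>p q. h x p q) (\<rho> v) + lsum (\<lambda>p q. h x p q) (\<rho> v')"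
        by (rule Rk_add[OF bh])
    next
      fix c x v show "lsum (\<lambda>p q. h (sK c x) p q) (\<rho> v) = c * lsum (\<lambda>p q. h x p q) (\<rho> v)"
        unfolding h_def by (simp add: bilD[OF b] lsum_kk[symmetric] mult.assoc)
    next
      fix c x v show "lsum (\<lambda>p q. h x p q) (\<rho> (sE c v)) = c * lsum (\<lambda>p q. h x p q) (\<rho> v)"
        by (rule Rk_sc[OF bh])
    qed
    have "lsum (\<lambda>u v. lsum (\<lambda>p q. h p q v) (\<Delta> u)) (\<rho> fe) = lsum (\<lambda>p q. h p q fe) (\<Delta> D)"
      by (rule Rk_fe[OF g1])
    then have "lsum \<beta> (\<Delta> D) = lsum (\<lambda>u v. lsum (\<lambda>p q. h p q v) (\<Delta> u)) (\<rho> fe)"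
      by (simp add: h_def \<phi>(2))
    also have "\<dots> = lsum (\<lambda>u v. lsum (\<lambda>p q. h u p q) (\<rho> v)) (\<rho> fe)"
      by (rule Rk_coass[OF trh])
    also have "\<dots> = lsum (\<lambda>p q. h D p q) (\<rho> fe)"
      by (rule Rk_fe[OF g2])
    also have "\<dots> = h D D fe"
      by (rule Rk_fe[OF bh])
    also have "\<dots> = \<beta> D D" by (simp add: h_def \<phi>(2))
    finally show "lsum \<beta> (\<Delta> D) = lsum \<beta> [(D, D)]" by simp
  qed
  show "\<epsilon> D = 1" by (rule eps_D)
qed

lemma S_sum: "S (\<Sum>s\<in>A. f s) = (\<Sum>s\<in>A. S (f s))"
  by (induct A rule: infinite_finite_induct) auto

lemma killer:
  assumes H: "\<And>z. (\<Sum>m<n. sK (psi (z * a m)) (X m)) = 0" and m: "m < n"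
  shows "X m = 0"
proof (rule ccontr)
  assume "X m \<noteq> 0"
  then obtain \<phi> where \<phi>: "Vector_Spaces.linear sK ((*) :: 'k \<Rightarrow> 'k \<Rightarrow> 'k) \<phi>" "\<phi> (X m) = 1"
    using sep0[OF vsK] by blast
  have \<phi>sc: "\<phi> (sK c x) = c * \<phi> x" for c x using \<phi>(1) by (simp add: Vector_Spaces.linear_iff)
  have \<phi>add: "\<phi> (x + x') = \<phi> x + \<phi> x'" for x x' using \<phi>(1) by (simp add: Vector_Spaces.linear_iff)
  have \<phi>0: "\<phi> 0 = 0" using \<phi>sc[of 0 0] by simp
  have \<phi>sum: "\<phi> (\<Sum>s\<in>A. f s) = (\<Sum>s\<in>A. \<phi> (f s))" for A f
    by (induct A rule: infinite_finite_induct) (auto simp: \<phi>0 \<phi>add)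
  define w where "w = (\<Sum>m<n. sE (\<phi> (X m)) (a m))"
  have "B z w = 0" for z
  proof -
    have "B z w = (\<Sum>m<n. \<phi> (X m) * psi (z * a m))"
      by (simp add: w_def B_sumR) (simp add: B_psi)
    also have "\<dots> = \<phi> (\<Sum>m<n. sK (psi (z * a m)) (X m))"
      by (simp add: \<phi>sum \<phi>sc mult.commute)
    also have "\<dots> = 0" using H[of z] by (simp add: \<phi>0)
    finally show ?thesis .
  qed
  then have "w = 0" by (rule B_ndR)
  then have "\<phi> (X m) = 0" using a_indep[of "\<lambda>m. \<phi> (X m)" m] m by (simp add: w_def)
  then show False using \<phi>(2) by simp
qed


lemma swap3: "(\<Sum>s\<in>A. \<Sum>j\<in>B'. \<Sum>m\<in>C. f s j m) = (\<Sum>m\<in>C. \<Sum>s\<in>A. \<Sum>j\<in>B'. (f s j m :: 'b::comm_monoid_add))"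
proof -
  have "(\<Sum>s\<in>A. \<Sum>j\<in>B'. \<Sum>m\<in>C. f s j m) = (\<Sum>s\<in>A. \<Sum>m\<in>C. \<Sum>j\<in>B'. f s j m)"
    by (rule sum.cong[OF refl]) (rule sum.swap)
  also have "\<dots> = (\<Sum>m\<in>C. \<Sum>s\<in>A. \<Sum>j\<in>B'. f s j m)" by (rule sum.swap)
  finally show ?thesis .
qed

lemma sum_delta_l': "j < n \<Longrightarrow> (\<Sum>t<n. (if j = t then 1 else 0) * f t) = (f j :: 'b::semiring_1)"
  using sum_delta_l[of j f] by (simp add: eq_commute)
lemma sum_delta_r': "j < n \<Longrightarrow> (\<Sum>t<n. f t * (if j = t then 1 else 0)) = (f j :: 'b::semiring_1)"
  using sum_delta_r[of j f] by (simp add: eq_commute)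

lemma E3S: assumes t: "t < n"
  shows "S (P t z) = (\<Sum>i<n. sK (psi (z * a i)) (y t i * S D))"
proof -
  have e: "(\<Sum>s<n. S (y i s) * S (P s z)) = sK (psi (z * a i)) (S D)" if i: "i < n" for i
  proof -
    have "S (\<Sum>s<n. P s z * y i s) = S (sK (psi (z * a i)) D)" by (simp add: E3[OF i])
    then show ?thesis by (simp add: S_sum S_antimult)
  qed
  have "S (P t z) = (\<Sum>s<n. (if t = s then 1 else 0) * S (P s z))"
    using t by (simp add: sum_delta_l')
  also have "\<dots> = (\<Sum>s<n. (\<Sum>i<n. y t i * S (y i s)) * S (P s z))"
    by (rule sum.cong) (auto simp: YS t)
  also have "\<dots> = (\<Sum>i<n. y t i * (\<Sum>s<n. S (y i s) * S (P s z)))"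
    by (simp add: sum_distrib_left sum_distrib_right mult.assoc) (rule sum.swap)
  also have "\<dots> = (\<Sum>i<n. y t i * sK (psi (z * a i)) (S D))"
    by (rule sum.cong) (auto simp: e)
  finally show ?thesis by simp
qed

lemma K1: assumes i: "i < n" and m: "m < n"
  shows "(\<Sum>s<n. \<Sum>j<n. sK (\<alpha> s j) (y j m * S D * S (y i s))) = sK (\<alpha> i m) (S D)"
proof -
  define X where "X m = (\<Sum>s<n. \<Sum>j<n. sK (\<alpha> s j) (y j m * S D * S (y i s))) - sK (\<alpha> i m) (S D)" for m
  have "(\<Sum>m<n. sK (psi (z * a m)) (X m)) = 0" for z
  proof -
    have s1: "(\<Sum>s<n. \<Sum>j<n. sK (\<alpha> s j) (S (P j z) * S (y i s))) = sK (\<Sum>j<n. \<alpha> i j * psi (z * a j)) (S D)"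
    proof -
      have "S (\<Sum>s<n. y i s * (\<Sum>j<n. sK (\<alpha> s j) (P j z))) = S (sK (\<Sum>j<n. \<alpha> i j * psi (z * a j)) D)"
        by (simp add: E2[OF i])
      then show ?thesis by (simp add: S_sum S_antimult sum_distrib_right)
    qed
    have s2: "(\<Sum>s<n. \<Sum>j<n. sK (\<alpha> s j) (S (P j z) * S (y i s))) =
       (\<Sum>m<n. sK (psi (z * a m)) (\<Sum>s<n. \<Sum>j<n. sK (\<alpha> s j) (y j m * S D * S (y i s))))"
    proof -
      have "(\<Sum>s<n. \<Sum>j<n. sK (\<alpha> s j) (S (P j z) * S (y i s))) =
          (\<Sum>s<n. \<Sum>j<n. \<Sum>m<n. sK (psi (z * a m)) (sK (\<alpha> s j) (y j m * S D * S (y i s))))"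
        by (rule sum.cong[OF refl], rule sum.cong[OF refl])
          (simp add: E3S scale_sum_right sum_distrib_right mult.assoc mult.commute)
      also have "\<dots> = (\<Sum>m<n. \<Sum>s<n. \<Sum>j<n. sK (psi (z * a m)) (sK (\<alpha> s j) (y j m * S D * S (y i s))))"
        by (rule swap3)
      also have "\<dots> = (\<Sum>m<n. sK (psi (z * a m)) (\<Sum>s<n. \<Sum>j<n. sK (\<alpha> s j) (y j m * S D * S (y i s))))"
        by (simp add: scale_sum_right)
      finally show ?thesis .
    qed
    have s3: "sK (\<Sum>j<n. \<alpha> i j * psi (z * a j)) (S D) = (\<Sum>m<n. sK (psi (z * a m)) (sK (\<alpha> i m) (S D)))"
      by (simp add: scale_sum_left mult.commute)
    show ?thesis using s1 s2 s3 by (simp add: X_def scale_right_diff_distrib sum_subtractf)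
  qed
  then have "X m = 0" using killer m by blast
  then show ?thesis by (simp add: X_def)
qed


lemma K1S: assumes i: "i < n" and m: "m < n"
  shows "(\<Sum>s<n. \<Sum>j<n. sK (\<alpha> s j) (S (S (y i s)) * D * S (y j m))) = sK (\<alpha> i m) D"
proof -
  have "S (\<Sum>s<n. \<Sum>j<n. sK (\<alpha> s j) (y j m * S D * S (y i s))) = S (sK (\<alpha> i m) (S D))"
    by (simp add: K1[OF i m])
  then show ?thesis by (simp add: S_sum S_antimult gl_SS[OF D_gl] mult.assoc)
qed

lemma K2: assumes i: "i < n" and t: "t < n"
  shows "(\<Sum>s<n. sK (\<alpha> s t) (S (S (y i s)) * D)) = (\<Sum>m<n. sK (\<alpha> i m) (D * y m t))"
proof -
  have "(\<Sum>m<n. (\<Sum>s<n. \<Sum>j<n. sK (\<alpha> s j) (S (S (y i s)) * D * S (y j m))) * y m t) = (\<Sum>m<n. sK (\<alpha> i m) D * y m t)"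
    by (rule sum.cong) (auto simp: K1S[OF i])
  moreover have "(\<Sum>m<n. (\<Sum>s<n. \<Sum>j<n. sK (\<alpha> s j) (S (S (y i s)) * D * S (y j m))) * y m t) =
      (\<Sum>s<n. \<Sum>j<n. sK (\<alpha> s j) (S (S (y i s)) * D * (\<Sum>m<n. S (y j m) * y m t)))"
  proof -
    have "(\<Sum>m<n. (\<Sum>s<n. \<Sum>j<n. sK (\<alpha> s j) (S (S (y i s)) * D * S (y j m))) * y m t) =
        (\<Sum>m<n. \<Sum>s<n. \<Sum>j<n. sK (\<alpha> s j) (S (S (y i s)) * D * S (y j m) * y m t))"
      by (simp add: sum_distrib_right)
    also have "\<dots> = (\<Sum>s<n. \<Sum>j<n. \<Sum>m<n. sK (\<alpha> s j) (S (S (y i s)) * D * S (y j m) * y m t))"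
      by (rule swap3[symmetric])
    also have "\<dots> = (\<Sum>s<n. \<Sum>j<n. sK (\<alpha> s j) (S (S (y i s)) * D * (\<Sum>m<n. S (y j m) * y m t)))"
      by (simp add: sum_distrib_left scale_sum_right mult.assoc)
    finally show ?thesis .
  qed
  moreover have "(\<Sum>s<n. \<Sum>j<n. sK (\<alpha> s j) (S (S (y i s)) * D * (\<Sum>m<n. S (y j m) * y m t))) =
      (\<Sum>s<n. sK (\<alpha> s t) (S (S (y i s)) * D))"
  proof (rule sum.cong[OF refl])
    fix s assume "s \<in> {..<n}"
    have "(\<Sum>j<n. sK (\<alpha> s j) (S (S (y i s)) * D * (\<Sum>m<n. S (y j m) * y m t))) =
        (\<Sum>j<n. sK (\<alpha> s j) (S (S (y i s)) * D) * (if j = t then 1 else 0))"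
      by (rule sum.cong) (auto simp: SY t)
    also have "\<dots> = sK (\<alpha> s t) (S (S (y i s)) * D)" by (rule sum_delta_r[OF t])
    finally show "(\<Sum>j<n. sK (\<alpha> s j) (S (S (y i s)) * D * (\<Sum>m<n. S (y j m) * y m t))) = sK (\<alpha> s t) (S (S (y i s)) * D)" .
  qed
  ultimately show ?thesis by (simp add: mult.assoc)
qed

lemma K3: assumes i: "i < n" and t: "t < n"
  shows "(\<Sum>s<n. sK (\<alpha> s t) (S D * S (S (y i s)) * D)) = (\<Sum>m<n. sK (\<alpha> i m) (y m t))"
proof -
  have "S D * (\<Sum>s<n. sK (\<alpha> s t) (S (S (y i s)) * D)) = S D * (\<Sum>m<n. sK (\<alpha> i m) (D * y m t))"
    by (simp add: K2[OF i t])
  then show ?thesis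
    by (simp add: sum_distrib_left mult.assoc gl_inv(2)[OF D_gl, unfolded mult.assoc] flip: mult.assoc)
qed

lemma key:
  assumes bet: "\<forall>s<n. \<forall>j<n. (\<Sum>m<n. \<alpha> s m * \<beta> m j) = (if s = j then 1 else 0)"
    and i: "i < n" and j: "j < n"
  shows "(\<Sum>k<n. \<Sum>m<n. sK (\<alpha> i k * \<beta> m j) (y k m)) = S D * S (S (y i j)) * D"
proof -
  have "(\<Sum>k<n. \<Sum>m<n. sK (\<alpha> i k * \<beta> m j) (y k m)) = (\<Sum>m<n. sK (\<beta> m j) (\<Sum>k<n. sK (\<alpha> i k) (y k m)))"
    by (subst sum.swap) (simp add: scale_sum_right mult.commute)
  also have "\<dots> = (\<Sum>m<n. sK (\<beta> m j) (\<Sum>s<n. sK (\<alpha> s m) (S D * S (S (y i s)) * D)))"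
    by (rule sum.cong) (auto simp: K3[OF i])
  also have "\<dots> = (\<Sum>m<n. \<Sum>s<n. sK (\<alpha> s m * \<beta> m j) (S D * S (S (y i s)) * D))"
    by (simp add: scale_sum_right mult.commute)
  also have "\<dots> = (\<Sum>s<n. \<Sum>m<n. sK (\<alpha> s m * \<beta> m j) (S D * S (S (y i s)) * D))"
    by (rule sum.swap)
  also have "\<dots> = (\<Sum>s<n. sK (\<Sum>m<n. \<alpha> s m * \<beta> m j) (S D * S (S (y i s)) * D))"
    by (simp add: scale_sum_left)
  also have "\<dots> = (\<Sum>s<n. sK (if s = j then 1 else 0) (S D * S (S (y i s)) * D))"
    by (rule sum.cong) (auto simp: bet j)
  also have "\<dots> = (\<Sum>s<n. if s = j then S D * S (S (y i s)) * D else 0)"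
    by (rule sum.cong) auto
  also have "\<dots> = S D * S (S (y i j)) * D"
    using j by (simp add: sum.delta')
  finally show ?thesis .
qed

end




lemma teq2_append: "teq2 s1 s2 t t' \<Longrightarrow> teq2 s1 s2 u u' \<Longrightarrow> teq2 s1 s2 (t @ u) (t' @ u')"
  by (simp add: teq2_iff)

lemma teq2_lsc: "teq2 s1 s2 t t' \<Longrightarrow> teq2 s1 s2 (lsc s1 c t) (lsc s1 c t')"
  by (simp add: teq2_iff lsum_lsc[OF vs_field])

context hopf begin

lemma Delta_zero: "teq2 sK sK (\<Delta> 0) []"
proof (rule teqK_I)
  fix \<beta> assume b: "bilk \<beta>"
  show "lsum \<beta> (\<Delta> 0) = lsum \<beta> []" using Lk_sc[OF b, of 0 0] by simp
qed

lemma tmul_cong: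
  assumes "teq2 sK sK t t'" "teq2 sK sK u u'"
  shows "teq2 sK sK (tmul t u) (tmul t' u')"
proof (rule teqK_I)
  fix \<beta> assume b: "bilk \<beta>"
  have "lsum \<beta> (tmul t u) = lsum (\<lambda>a b. lsum (\<lambda>c d. \<beta> (a * c) (b * d)) u) t" by (rule lsum_tmul)
  also have "\<dots> = lsum (\<lambda>a b. lsum (\<lambda>c d. \<beta> (a * c) (b * d)) u) t'"
    by (rule teqK_eval[OF assms(1) bilk_lsum_mulpair[OF b]])
  also have "\<dots> = lsum (\<lambda>a b. lsum (\<lambda>c d. \<beta> (a * c) (b * d)) u') t'"
    by (rule lsum_cong) (rule teqK_eval[OF assms(2) bilk_mulpair[OF b]])
  also have "\<dots> = lsum \<beta> (tmul t' u')" by (rule lsum_tmul[symmetric])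
  finally show "lsum \<beta> (tmul t u) = lsum \<beta> (tmul t' u')" .
qed

lemma flipS_cong:
  assumes "teq2 sK sK t t'"
  shows "teq2 sK sK (map (\<lambda>(u, v). (S v, S u)) t) (map (\<lambda>(u, v). (S v, S u)) t')"
proof (rule teqK_I)
  fix \<beta> assume b: "bilk \<beta>"
  have b2: "bilk (\<lambda>u v. \<beta> (S v) (S u))" unfolding bil_def by (simp add: bilD[OF b])
  show "lsum \<beta> (map (\<lambda>(u, v). (S v, S u)) t) = lsum \<beta> (map (\<lambda>(u, v). (S v, S u)) t')"
    using teqK_eval[OF assms b2] by (simp add: lsum_map)
qed

lemma S_prod_list: "S (prod_list xs) = prod_list (rev (map S xs))"
  by (induct xs) (auto simp: S_antimult)

end

context ctx begin

lemma Rho_zero: "teq2 sK sE (\<rho> 0) []"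
proof (rule teq2_I)
  fix \<beta> :: "'a \<Rightarrow> 'e \<Rightarrow> 'k" assume b: "bilKE \<beta>"
  show "lsum \<beta> (\<rho> 0) = lsum \<beta> []" using Rk_zero[OF b] by simp
qed

definition gens :: "'a set" where
  "gens = {(S ^^ k) (y i j) | k i j. i < n \<and> j < n}"

definition Hs :: "'a set" where
  "Hs = span (prod_list ` {xs. set xs \<subseteq> gens})"

lemma H_sub: "subspace Hs" unfolding Hs_def by simp

lemma H_one: "1 \<in> Hs"
  unfolding Hs_def by (rule span_base) (auto intro: image_eqI[where x="[]"])

lemma prods_mult: "p \<in> prod_list ` {xs. set xs \<subseteq> gens} \<Longrightarrow> q \<in> prod_list ` {xs. set xs \<subseteq> gens} \<Longrightarrow>
  p * q \<in> prod_list ` {xs. set xs \<subseteq> gens}"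
  by (auto intro!: image_eqI[where x="_ @ _"])

lemma H_mult: assumes x: "x \<in> Hs" and z: "z \<in> Hs" shows "x * z \<in> Hs"
proof -
  let ?M = "prod_list ` {xs. set xs \<subseteq> gens}"
  have base: "p * w \<in> Hs" if p: "p \<in> ?M" and w: "w \<in> Hs" for p w
    using w unfolding Hs_def
  proof (induct rule: span_induct)
    case base show ?case unfolding subspace_def
      by (auto simp: distrib_left span_zero span_add span_scale)
  next
    case (step q) then show ?case using prods_mult[OF p] by (simp add: span_base)
  qed
  show ?thesis using x
    unfolding Hs_def[of]
  proof (induct rule: span_induct)
    case base show ?case unfolding subspace_def
      using z by (auto simp: distrib_right H_sub[unfolded Hs_def] span_zero span_add span_scale Hs_def)
  next
    case (step p) then show ?case using base[OF _ z] by (simp add: Hs_def)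
  qed
qed

lemma y_gens: "i < n \<Longrightarrow> j < n \<Longrightarrow> y i j \<in> gens"
  unfolding gens_def by (intro CollectI exI[of _ 0] exI[of _ i] exI[of _ j]) simp

lemma gens_S: assumes "g \<in> gens" shows "S g \<in> gens"
proof -
  obtain k i j where g: "g = (S ^^ k) (y i j)" "i < n" "j < n" using assms unfolding gens_def by auto
  then have "S g = (S ^^ Suc k) (y i j)" by simp
  then show ?thesis unfolding gens_def using g(2,3) by blast
qed

lemma gens_H: "g \<in> gens \<Longrightarrow> g \<in> Hs"
  unfolding Hs_def by (rule span_base) (auto intro: image_eqI[where x="[g]"])

lemma H_S: assumes x: "x \<in> Hs" shows "S x \<in> Hs"
  using x unfolding Hs_def
proof (induct rule: span_induct)
  case base show ?case unfolding subspace_def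
    by (auto simp: span_zero span_add span_scale)
next
  case (step p)
  then obtain xs where xs: "set xs \<subseteq> gens" "p = prod_list xs" by auto
  have "set (rev (map S xs)) \<subseteq> gens" using xs(1) gens_S by auto
  then show ?case using xs(2) by (auto simp: S_prod_list intro!: span_base)
qed

lemma H_least:
  assumes X: "subspace X" "1 \<in> X" "\<And>x z. x \<in> X \<Longrightarrow> z \<in> X \<Longrightarrow> x * z \<in> X"
    "\<And>x. x \<in> X \<Longrightarrow> S x \<in> X" "\<And>i j. i < n \<Longrightarrow> j < n \<Longrightarrow> y i j \<in> X"
  shows "Hs \<subseteq> X"
proof -
  have g: "g \<in> X" if "g \<in> gens" for g
  proof -
    obtain k i j where g: "g = (S ^^ k) (y i j)" "i < n" "j < n" using \<open>g \<in> gens\<close> unfolding gens_def by auto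
    have "(S ^^ k) (y i j) \<in> X" by (induct k) (auto simp: X(4) X(5)[OF g(2,3)])
    then show ?thesis using g by simp
  qed
  have p: "prod_list xs \<in> X" if "set xs \<subseteq> gens" for xs
    using that by (induct xs) (auto simp: X(2) X(3) g)
  have "prod_list ` {xs. set xs \<subseteq> gens} \<subseteq> X" using p by auto
  then show ?thesis unfolding Hs_def by (rule span_minimal[OF _ X(1)])
qed

lemma H_delta: assumes x: "x \<in> Hs" shows "\<exists>t. set t \<subseteq> Hs \<times> Hs \<and> teq2 sK sK (\<Delta> x) t"
proof -
  define G where "G = {x. \<exists>t. set t \<subseteq> Hs \<times> Hs \<and> teq2 sK sK (\<Delta> x) t}"
  have Gm: "x * z \<in> G" if xG: "x \<in> G" and zG: "z \<in> G" and "x \<in> Hs" "z \<in> Hs" for x z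
  proof -
    obtain t u where t: "set t \<subseteq> Hs \<times> Hs" "teq2 sK sK (\<Delta> x) t" and u: "set u \<subseteq> Hs \<times> Hs" "teq2 sK sK (\<Delta> z) u"
      using xG zG unfolding G_def by blast
    have "teq2 sK sK (\<Delta> (x * z)) (tmul t u)"
      using teq2_trans[OF Dmul tmul_cong[OF t(2) u(2)]] .
    moreover have "set (tmul t u) \<subseteq> Hs \<times> Hs"
      using t(1) u(1) unfolding tmul_def by (auto intro: H_mult)
    ultimately show ?thesis unfolding G_def by blast
  qed
  have Gs: "S x \<in> G" if xG: "x \<in> G" and "x \<in> Hs" for x
  proof -
    obtain t where t: "set t \<subseteq> Hs \<times> Hs" "teq2 sK sK (\<Delta> x) t" using xG unfolding G_def by auto
    have "teq2 sK sK (\<Delta> (S x)) (map (\<lambda>(u, v). (S v, S u)) t)"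
      using teq2_trans[OF S_anticomult flipS_cong[OF t(2)]] .
    moreover have "set (map (\<lambda>(u, v). (S v, S u)) t) \<subseteq> Hs \<times> Hs" using t(1) by (auto intro: H_S)
    ultimately show ?thesis unfolding G_def by blast
  qed
  have Gy: "y i j \<in> G" if "i < n" "j < n" for i j
  proof -
    have "set (map (\<lambda>s. (y i s, y s j)) [0..<n]) \<subseteq> Hs \<times> Hs"
      using that by (auto intro!: gens_H y_gens)
    then show ?thesis using Delta_y[OF that] unfolding G_def by blast
  qed
  have gG: "g \<in> G" if "g \<in> gens" for g
  proof -
    obtain k i j where g: "g = (S ^^ k) (y i j)" "i < n" "j < n" using \<open>g \<in> gens\<close> unfolding gens_def by auto
    have "(S ^^ k) (y i j) \<in> G \<and> (S ^^ k) (y i j) \<in> gens"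
    proof (induct k)
      case 0 then show ?case using Gy[OF g(2,3)] y_gens[OF g(2,3)] by simp
    next
      case (Suc k) then show ?case using Gs gens_H gens_S by auto
    qed
    then show ?thesis using g by simp
  qed
  have G1: "1 \<in> G" unfolding G_def by (intro CollectI exI[where x="[(1, 1)]"]) (auto simp: Done H_one)
  have pG: "prod_list xs \<in> G \<and> prod_list xs \<in> Hs" if "set xs \<subseteq> gens" for xs
    using that
  proof (induct xs)
    case Nil then show ?case using G1 H_one by simp
  next
    case (Cons g xs) then show ?case using Gm[of g "prod_list xs"] gG gens_H H_mult by auto
  qed
  have "x \<in> G" using x unfolding Hs_def
  proof (induct rule: span_induct)
    case base
    show ?case unfolding subspace_def Collect_mem_eq
    proof (intro conjI ballI allI)
      show "0 \<in> G" unfolding G_def by (intro CollectI exI[where x="[]"]) (simp add: Delta_zero)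
    next
      fix x z assume "x \<in> G" "z \<in> G"
      then obtain t u where t: "set t \<subseteq> Hs \<times> Hs" "teq2 sK sK (\<Delta> x) t" and u: "set u \<subseteq> Hs \<times> Hs" "teq2 sK sK (\<Delta> z) u"
        unfolding G_def by auto
      have "teq2 sK sK (\<Delta> (x + z)) (t @ u)" using teq2_trans[OF Dadd teq2_append[OF t(2) u(2)]] .
      then show "x + z \<in> G" using t(1) u(1) unfolding G_def by (intro CollectI exI[where x="t @ u"]) auto
    next
      fix c x assume "x \<in> G"
      then obtain t where t: "set t \<subseteq> Hs \<times> Hs" "teq2 sK sK (\<Delta> x) t" unfolding G_def by auto
      have "teq2 sK sK (\<Delta> (sK c x)) (lsc sK c t)" using teq2_trans[OF Dsc teq2_lsc[OF t(2)]] .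
      moreover have "set (lsc sK c t) \<subseteq> Hs \<times> Hs" using t(1) H_sub unfolding lsc_def subspace_def by auto
      ultimately show "sK c x \<in> G" unfolding G_def by blast
    qed
  next
    case (step p) then show ?case using pG by auto
  qed
  then show ?thesis unfolding G_def by blast
qed

lemma H_hopf: "hopf_subalgebra sK \<Delta> S Hs"
  unfolding hopf_subalgebra_def using H_sub H_one H_mult H_delta H_S by auto

lemma span_repr: assumes v: "v \<in> E.span (a ` {..<n})" shows "\<exists>c. v = (\<Sum>j<n. sE (c j) (a j))"
proof -
  let ?C = "{v. \<exists>c. v = (\<Sum>j<n. sE (c j) (a j))}"
  have sub: "E.subspace ?C"
    unfolding E.subspace_def
  proof (intro conjI ballI allI)
    show "0 \<in> ?C" by (intro CollectI exI[where x="\<lambda>_. 0"]) simp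
  next
    fix x z assume "x \<in> ?C" "z \<in> ?C"
    then obtain c c' where "x = (\<Sum>j<n. sE (c j) (a j))" "z = (\<Sum>j<n. sE (c' j) (a j))" by auto
    then show "x + z \<in> ?C"
      by (intro CollectI exI[where x="\<lambda>j. c j + c' j"]) (simp add: E.scale_left_distrib sum.distrib)
  next
    fix k x assume "x \<in> ?C"
    then obtain c where "x = (\<Sum>j<n. sE (c j) (a j))" by auto
    then show "sE k x \<in> ?C"
      by (intro CollectI exI[where x="\<lambda>j. k * c j"]) (simp add: E.scale_sum_right)
  qed
  have base: "x \<in> ?C" if xa: "x \<in> a ` {..<n}" for x
  proof -
    obtain i where i: "i < n" "x = a i" using xa by auto
    have "(\<Sum>j<n. sE (if j = i then 1 else 0) (a j)) = (\<Sum>j<n. if j = i then a j else 0)"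
      by (rule sum.cong) auto
    also have "\<dots> = a i" using i by (simp add: sum.delta')
    finally show ?thesis using i by (intro CollectI exI[where x="\<lambda>j. if j = i then 1 else 0"]) simp
  qed
  have "E.span (a ` {..<n}) \<subseteq> ?C" by (rule E.span_minimal) (use base sub in auto)
  then show ?thesis using v by auto
qed

lemma H_rho: assumes w: "w \<in> Egr 1" shows "\<exists>t. set t \<subseteq> Hs \<times> Egr 1 \<and> teq2 sK sE (\<rho> w) t"
proof -
  have "w \<in> E.span (a ` {..<n})" using w a_span by simp
  then show ?thesis
  proof (induct rule: E.span_induct)
    case base
    show ?case unfolding E.subspace_def
    proof (intro conjI ballI allI)
      show "0 \<in> {x. \<exists>t. set t \<subseteq> Hs \<times> Egr 1 \<and> teq2 sK sE (\<rho> x) t}"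
        by (intro CollectI exI[where x="[]"]) (simp add: Rho_zero)
    next
      fix x z assume "x \<in> {x. \<exists>t. set t \<subseteq> Hs \<times> Egr 1 \<and> teq2 sK sE (\<rho> x) t}" "z \<in> {x. \<exists>t. set t \<subseteq> Hs \<times> Egr 1 \<and> teq2 sK sE (\<rho> x) t}"
      then obtain t u where t: "set t \<subseteq> Hs \<times> Egr 1" "teq2 sK sE (\<rho> x) t" and u: "set u \<subseteq> Hs \<times> Egr 1" "teq2 sK sE (\<rho> z) u"
        by auto
      have "teq2 sK sE (\<rho> (x + z)) (t @ u)" using teq2_trans[OF Radd teq2_append[OF t(2) u(2)]] .
      then show "x + z \<in> {x. \<exists>t. set t \<subseteq> Hs \<times> Egr 1 \<and> teq2 sK sE (\<rho> x) t}" using t(1) u(1)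
        by (intro CollectI exI[where x="t @ u"]) auto
    next
      fix c x assume "x \<in> {x. \<exists>t. set t \<subseteq> Hs \<times> Egr 1 \<and> teq2 sK sE (\<rho> x) t}"
      then obtain t where t: "set t \<subseteq> Hs \<times> Egr 1" "teq2 sK sE (\<rho> x) t" by auto
      have "teq2 sK sE (\<rho> (sE c x)) (lsc sK c t)" using teq2_trans[OF Rsc teq2_lsc[OF t(2)]] .
      moreover have "set (lsc sK c t) \<subseteq> Hs \<times> Egr 1" using t(1) H_sub unfolding lsc_def subspace_def by auto
      ultimately show "sE c x \<in> {x. \<exists>t. set t \<subseteq> Hs \<times> Egr 1 \<and> teq2 sK sE (\<rho> x) t}" by blast
    qed
  next
    case (step x)
    then obtain i where i: "i < n" "x = a i" by auto
    have "set (map (\<lambda>s. (y i s, a s)) [0..<n]) \<subseteq> Hs \<times> Egr 1"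
      using i a_span by (auto intro!: gens_H E.span_base y_gens)
    then show ?case using Ymat i by blast
  qed
qed

lemma H_univ: "Hs = UNIV"
  using inner_faithful H_hopf H_rho unfolding inner_faithful_E1_def by blast


lemma coef_unique:
  assumes "(\<Sum>j<n. sE (c j) (a j)) = (\<Sum>j<n. sE (c' j) (a j))" "j < n"
  shows "c j = c' j"
proof -
  have "(\<Sum>j<n. sE (c j - c' j) (a j)) = 0"
    using assms(1) by (simp add: E.scale_left_diff_distrib sum_subtractf)
  then show ?thesis using a_indep[of "\<lambda>j. c j - c' j" j] assms(2) by simp
qed

lemma lincomb_swap:
  "(\<Sum>j<n. sE (c j) (\<Sum>k<n. sE (d j k) (a k))) = (\<Sum>k<n. sE (\<Sum>j<n. c j * d j k) (a k))"
  by (simp add: E.scale_sum_right E.scale_sum_left) (rule sum.swap)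

lemma a_delta: "i < n \<Longrightarrow> a i = (\<Sum>k<n. sE (if i = k then 1 else 0) (a k))"
proof -
  assume i: "i < n"
  have "(\<Sum>k<n. sE (if i = k then 1 else 0) (a k)) = (\<Sum>k<n. if i = k then a k else 0)"
    by (rule sum.cong) auto
  also have "\<dots> = a i" using i by (simp add: sum.delta)
  finally show ?thesis by simp
qed

lemma alpha_inverse:
  "\<exists>\<beta>. (\<forall>i j. n \<le> i \<or> n \<le> j \<longrightarrow> \<beta> i j = 0) \<and>
      (\<forall>i<n. \<forall>j<n. (\<Sum>k<n. \<alpha> i k * \<beta> k j) = (if i = j then 1 else 0)) \<and>
      (\<forall>i<n. \<forall>j<n. (\<Sum>k<n. \<beta> i k * \<alpha> k j) = (if i = j then 1 else 0))"
proof -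
  have linmu: "Vector_Spaces.linear sE sE \<mu>" and bmu: "bij \<mu>" and imu: "\<mu> ` Egr 1 = Egr 1"
    using mu_nak by (auto simp: nakayama_aut_def)
  have mu_add: "\<mu> (x + z) = \<mu> x + \<mu> z" and mu_sc: "\<mu> (sE c x) = sE c (\<mu> x)" for x z c
    using linmu by (simp_all add: Vector_Spaces.linear_iff)
  define \<nu> where "\<nu> = inv \<mu>"
  have mu_nu: "\<mu> (\<nu> x) = x" for x unfolding \<nu>_def using bmu by (simp add: bij_is_surj surj_f_inv_f)
  have nu_mu: "\<nu> (\<mu> x) = x" for x unfolding \<nu>_def using bmu by (simp add: bij_is_inj)
  have nu_add: "\<nu> (x + z) = \<nu> x + \<nu> z" for x z
  proof -
    have "\<nu> (x + z) = \<nu> (\<mu> (\<nu> x + \<nu> z))" by (simp add: mu_add mu_nu)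
    also have "\<dots> = \<nu> x + \<nu> z" by (rule nu_mu)
    finally show ?thesis .
  qed
  have nu_sc: "\<nu> (sE c x) = sE c (\<nu> x)" for c x
  proof -
    have "\<nu> (sE c x) = \<nu> (\<mu> (sE c (\<nu> x)))" by (simp add: mu_sc mu_nu)
    also have "\<dots> = sE c (\<nu> x)" by (rule nu_mu)
    finally show ?thesis .
  qed
  have mu_sum: "\<mu> (\<Sum>j<n. sE (c j) (f j)) = (\<Sum>j<n. sE (c j) (\<mu> (f j)))" for c f
    using mu_sc[of 0 0] by (induct n) (auto simp: mu_add mu_sc)
  have nu_sum: "\<nu> (\<Sum>j<n. sE (c j) (f j)) = (\<Sum>j<n. sE (c j) (\<nu> (f j)))" for c f
    using nu_sc[of 0 0] by (induct n) (auto simp: nu_add nu_sc)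
  have aE: "a i \<in> Egr 1" if "i < n" for i using that a_span by (auto intro: E.span_base)
  have nuE: "\<nu> (a i) \<in> Egr 1" if i: "i < n" for i
  proof -
    obtain x where x: "x \<in> Egr 1" "a i = \<mu> x" using aE[OF i] imu by blast
    then show ?thesis using nu_mu by simp
  qed
  have ex: "\<exists>c. \<nu> (a i) = (\<Sum>j<n. sE (c j) (a j))" if "i < n" for i
    using span_repr nuE[OF that] a_span by simp
  define \<beta> where "\<beta> i j = (if i < n \<and> j < n then (SOME c. \<nu> (a i) = (\<Sum>j<n. sE (c j) (a j))) j else 0)" for i j
  have nu_a: "\<nu> (a i) = (\<Sum>j<n. sE (\<beta> i j) (a j))" if i: "i < n" for i
  proof -
    have "\<nu> (a i) = (\<Sum>j<n. sE ((SOME c. \<nu> (a i) = (\<Sum>j<n. sE (c j) (a j))) j) (a j))"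
      using someI_ex[OF ex[OF i]] .
    also have "\<dots> = (\<Sum>j<n. sE (\<beta> i j) (a j))" by (rule sum.cong) (auto simp: \<beta>_def i)
    finally show ?thesis .
  qed
  show ?thesis
  proof (intro exI conjI allI impI)
    fix i j assume "n \<le> i \<or> n \<le> j" then show "\<beta> i j = 0" by (auto simp: \<beta>_def)
  next
    fix i j assume i: "i < n" and j: "j < n"
    have "(\<Sum>k<n. sE (if i = k then 1 else 0) (a k)) = a i" using a_delta[OF i] by simp
    also have "\<dots> = \<nu> (\<mu> (a i))" by (simp add: nu_mu)
    also have "\<dots> = (\<Sum>k<n. sE (\<Sum>m<n. \<alpha> i m * \<beta> m k) (a k))"
      using alpha i by (simp add: nu_sum nu_a lincomb_swap)
    finally have "(\<Sum>k<n. sE (if i = k then 1 else 0) (a k)) = (\<Sum>k<n. sE (\<Sum>m<n. \<alpha> i m * \<beta> m k) (a k))" .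
    from coef_unique[OF this j] show "(\<Sum>k<n. \<alpha> i k * \<beta> k j) = (if i = j then 1 else 0)" by simp
  next
    fix i j assume i: "i < n" and j: "j < n"
    have "(\<Sum>k<n. sE (if i = k then 1 else 0) (a k)) = a i" using a_delta[OF i] by simp
    also have "\<dots> = \<mu> (\<nu> (a i))" by (simp add: mu_nu)
    also have "\<dots> = (\<Sum>k<n. sE (\<Sum>m<n. \<beta> i m * \<alpha> m k) (a k))"
    proof -
      have "\<mu> (\<nu> (a i)) = (\<Sum>m<n. sE (\<beta> i m) (\<mu> (a m)))" by (simp add: nu_a[OF i] mu_sum)
      also have "\<dots> = (\<Sum>m<n. sE (\<beta> i m) (\<Sum>k<n. sE (\<alpha> m k) (a k)))"
        by (rule sum.cong) (auto simp: alpha)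
      also have "\<dots> = (\<Sum>k<n. sE (\<Sum>m<n. \<beta> i m * \<alpha> m k) (a k))" by (rule lincomb_swap)
      finally show ?thesis .
    qed
    finally have "(\<Sum>k<n. sE (if i = k then 1 else 0) (a k)) = (\<Sum>k<n. sE (\<Sum>m<n. \<beta> i m * \<alpha> m k) (a k))" .
    from coef_unique[OF this j] show "(\<Sum>k<n. \<beta> i k * \<alpha> k j) = (if i = j then 1 else 0)" by simp
  qed
qed

lemma mat_inv_alpha:
  "(\<forall>i<n. \<forall>j<n. (\<Sum>k<n. \<alpha> i k * mat_inv n \<alpha> k j) = (if i = j then 1 else 0)) \<and>
   (\<forall>i<n. \<forall>j<n. (\<Sum>k<n. mat_inv n \<alpha> i k * \<alpha> k j) = (if i = j then 1 else 0))"
proof -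
  from alpha_inverse obtain \<beta> where bb: "(\<forall>i j. n \<le> i \<or> n \<le> j \<longrightarrow> \<beta> i j = 0) \<and>
    (\<forall>i<n. \<forall>j<n. (\<Sum>k<n. \<alpha> i k * \<beta> k j) = (if i = j then 1 else 0)) \<and>
    (\<forall>i<n. \<forall>j<n. (\<Sum>k<n. \<beta> i k * \<alpha> k j) = (if i = j then 1 else 0))"
    by (rule exE)
  have b: "\<forall>i j. n \<le> i \<or> n \<le> j \<longrightarrow> \<beta> i j = 0"
    "\<forall>i<n. \<forall>j<n. (\<Sum>k<n. \<alpha> i k * \<beta> k j) = (if i = j then 1 else 0)"
    "\<forall>i<n. \<forall>j<n. (\<Sum>k<n. \<beta> i k * \<alpha> k j) = (if i = j then 1 else 0)"
    using bb by (rule conjunct1, rule conjunct1[OF conjunct2], rule conjunct2[OF conjunct2])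
  have "mat_inv n \<alpha> = \<beta>"
    unfolding mat_inv_def
  proof (rule the_equality)
    show "(\<forall>i j. n \<le> i \<or> n \<le> j \<longrightarrow> \<beta> i j = 0) \<and>
      (\<forall>i<n. \<forall>j<n. (\<Sum>k<n. \<alpha> i k * \<beta> k j) = (if i = j then 1 else 0)) \<and>
      (\<forall>i<n. \<forall>j<n. (\<Sum>k<n. \<beta> i k * \<alpha> k j) = (if i = j then 1 else 0))"
      by (intro conjI b(1) b(2) b(3))
  next
    fix B' assume B': "(\<forall>i j. n \<le> i \<or> n \<le> j \<longrightarrow> B' i j = 0) \<and>
      (\<forall>i<n. \<forall>j<n. (\<Sum>k<n. \<alpha> i k * B' k j) = (if i = j then 1 else 0)) \<and>
      (\<forall>i<n. \<forall>j<n. (\<Sum>k<n. B' i k * \<alpha> k j) = (if i = j then 1 else 0))"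
    have B1: "\<forall>i j. n \<le> i \<or> n \<le> j \<longrightarrow> B' i j = 0" using B' by (rule conjunct1)
    have B2: "\<forall>i<n. \<forall>j<n. (\<Sum>k<n. \<alpha> i k * B' k j) = (if i = j then 1 else 0)"
      using B' by (rule conjunct1[OF conjunct2])
    show "B' = \<beta>"
    proof (intro ext)
      fix i j
      show "B' i j = \<beta> i j"
      proof (cases "i < n \<and> j < n")
        case True
        then have i: "i < n" and j: "j < n" by auto
        have "B' i j = (\<Sum>k<n. (if i = k then 1 else 0) * B' k j)" using i by (simp add: sum_delta_l')
        also have "\<dots> = (\<Sum>k<n. (\<Sum>m<n. \<beta> i m * \<alpha> m k) * B' k j)"
        proof (rule sum.cong[OF refl])
          fix k assume "k \<in> {..<n}"
          then have "(\<Sum>m<n. \<beta> i m * \<alpha> m k) = (if i = k then 1 else 0)" using b(3) i by simp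
          then show "(if i = k then 1 else 0) * B' k j = (\<Sum>m<n. \<beta> i m * \<alpha> m k) * B' k j" by simp
        qed
        also have "\<dots> = (\<Sum>m<n. \<beta> i m * (\<Sum>k<n. \<alpha> m k * B' k j))"
          by (simp add: sum_distrib_left sum_distrib_right mult.assoc) (rule sum.swap)
        also have "\<dots> = (\<Sum>m<n. \<beta> i m * (if m = j then 1 else 0))"
        proof (rule sum.cong[OF refl])
          fix m assume "m \<in> {..<n}"
          then have "(\<Sum>k<n. \<alpha> m k * B' k j) = (if m = j then 1 else 0)" using B2 j by simp
          then show "\<beta> i m * (\<Sum>k<n. \<alpha> m k * B' k j) = \<beta> i m * (if m = j then 1 else 0)" by simp
        qed
        also have "\<dots> = \<beta> i j" using j by (rule sum_delta_r)
        finally show ?thesis .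
      next
        case False
        then have "n \<le> i \<or> n \<le> j" by auto
        then show ?thesis using b(1) B1 by metis
      qed
    qed
  qed
  then show ?thesis using b by simp
qed

lemma lin0: "Vector_Spaces.linear sK sK f \<Longrightarrow> f 0 = 0"
  using Vector_Spaces.linear_iff[of sK sK f] by (metis scale_zero_left)

lemma endo_unique:
  assumes f: "hopf_endo sK \<Delta> \<epsilon> S f" and g: "hopf_endo sK \<Delta> \<epsilon> S g"
    and fg: "\<And>i j. i < n \<Longrightarrow> j < n \<Longrightarrow> f (y i j) = g (y i j)"
  shows "f = g"
proof -
  have lf: "Vector_Spaces.linear sK sK f" and lg: "Vector_Spaces.linear sK sK g"
    using f g by (auto simp: hopf_endo_def)
  have X: "Hs \<subseteq> {x. f x = g x}"
  proof (rule H_least)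
    show "subspace {x. f x = g x}"
      unfolding subspace_def using lf lg by (auto simp: Vector_Spaces.linear_iff lin0[OF lf] lin0[OF lg])
    show "1 \<in> {x. f x = g x}" using f g by (simp add: hopf_endo_def)
    show "x * z \<in> {x. f x = g x}" if "x \<in> {x. f x = g x}" "z \<in> {x. f x = g x}" for x z
      using that f g by (simp add: hopf_endo_def)
    show "S x \<in> {x. f x = g x}" if "x \<in> {x. f x = g x}" for x
    proof -
      have "S (f x) = f (S x)" "S (g x) = g (S x)" using f g by (simp_all add: hopf_endo_def)
      then show ?thesis using that by simp
    qed
    show "y i j \<in> {x. f x = g x}" if "i < n" "j < n" for i j using fg that by simp
  qed
  then show ?thesis using H_univ by auto
qed

definition eta :: "'a \<Rightarrow> 'a" where "eta x = S D * S (S x) * D"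

lemma eta_endo: "hopf_endo sK \<Delta> \<epsilon> S eta"
  unfolding eta_def[abs_def] by (rule conj_endo[OF D_gl])

lemma eta_y: "i < n \<Longrightarrow> j < n \<Longrightarrow> eta (y i j) = (\<Sum>k<n. \<Sum>m<n. sK (\<alpha> i k * mat_inv n \<alpha> m j) (y k m))"
  using key[of "mat_inv n \<alpha>" i j] mat_inv_alpha by (simp add: eta_def)

lemma surj_eta: "surj eta"
proof -
  have le: "Vector_Spaces.linear sK sK eta" using eta_endo by (simp add: hopf_endo_def)
  have e_add: "eta (x + z) = eta x + eta z" and e_sc: "eta (sK c x) = sK c (eta x)" for x z c
    using le by (simp_all add: Vector_Spaces.linear_iff)
  have e_sum: "eta (\<Sum>j\<in>A. f j) = (\<Sum>j\<in>A. eta (f j))" for A f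
    by (induct A rule: infinite_finite_induct) (auto simp: e_add lin0[OF le])
  have "Hs \<subseteq> range eta"
  proof (rule H_least)
    show "subspace (range eta)"
      unfolding subspace_def
    proof (intro conjI ballI allI)
      show "0 \<in> range eta" by (rule range_eqI[where x=0]) (simp add: lin0[OF le])
      show "x + z \<in> range eta" if "x \<in> range eta" "z \<in> range eta" for x z
        using that by (auto simp flip: e_add)
      show "sK c x \<in> range eta" if "x \<in> range eta" for c x
        using that by (auto simp flip: e_sc)
    qed
    have e1: "eta 1 = 1" and em: "eta (x * z) = eta x * eta z" and eS: "S (eta x) = eta (S x)" for x z
      using eta_endo by (simp_all add: hopf_endo_def)
    show "1 \<in> range eta" by (rule range_eqI[where x=1]) (simp add: e1)
    show "x * z \<in> range eta" if "x \<in> range eta" "z \<in> range eta" for x z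
      using that by (auto simp flip: em)
    show "S x \<in> range eta" if "x \<in> range eta" for x
      using that by (auto simp: eS)
    show "y p t \<in> range eta" if p: "p < n" and t: "t < n" for p t
    proof -
      have bi: "\<forall>i<n. \<forall>j<n. (\<Sum>k<n. mat_inv n \<alpha> i k * \<alpha> k j) = (if i = j then 1 else 0)"
        using mat_inv_alpha by blast
      have "y p t = (\<Sum>m<n. sK (if p = m then 1 else 0) (y m t))"
      proof -
        have "(\<Sum>m<n. sK (if p = m then 1 else 0) (y m t)) = (\<Sum>m<n. if p = m then y m t else 0)"
          by (rule sum.cong) auto
        also have "\<dots> = y p t" using p by (simp add: sum.delta)
        finally show ?thesis by simp
      qed
      also have "\<dots> = (\<Sum>m<n. sK (\<Sum>i<n. mat_inv n \<alpha> p i * \<alpha> i m) (y m t))"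
        by (rule sum.cong) (use bi p in auto)
      also have "\<dots> = (\<Sum>i<n. sK (mat_inv n \<alpha> p i) (\<Sum>m<n. sK (\<alpha> i m) (y m t)))"
        by (simp add: scale_sum_left scale_sum_right) (rule sum.swap)
      also have "\<dots> = (\<Sum>i<n. sK (mat_inv n \<alpha> p i) (\<Sum>s<n. sK (\<alpha> s t) (eta (y i s))))"
        by (rule sum.cong) (auto simp: K3[OF _ t] eta_def)
      also have "\<dots> = eta (\<Sum>i<n. sK (mat_inv n \<alpha> p i) (\<Sum>s<n. sK (\<alpha> s t) (y i s)))"
        by (simp add: e_sum e_sc)
      finally show ?thesis by simp
    qed
  qed
  then show ?thesis using H_univ by auto
qed

lemma surj_S: "surj S"
proof -
  have "x \<in> range S" for x
  proof -
    obtain w where w: "S D * x * D = eta w" using surjD[OF surj_eta] by blast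
    have e: "D * (S D * X * D) * S D = X" for X
    proof -
      have "D * (S D * X * D) * S D = (D * S D) * X * (D * S D)" by (simp add: mult.assoc)
      also have "\<dots> = X" by (simp add: gl_inv[OF D_gl])
      finally show ?thesis .
    qed
    have "S (S w) = D * (S D * S (S w) * D) * S D" by (rule e[symmetric])
    also have "\<dots> = D * (S D * x * D) * S D" using w by (simp add: eta_def)
    also have "\<dots> = x" by (rule e)
    finally show ?thesis by (rule range_eqI[OF sym])
  qed
  then show ?thesis by auto
qed

lemma main:
  shows "(\<exists>!f. hopf_endo sK \<Delta> \<epsilon> S f \<and>
            (\<forall>i<n. \<forall>j<n. f (y i j) =
               (\<Sum>k<n. \<Sum>m<n. sK (\<alpha> i k * mat_inv n \<alpha> m j) (y k m))))
       \<and> (\<forall>f. hopf_endo sK \<Delta> \<epsilon> S f \<and>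
            (\<forall>i<n. \<forall>j<n. f (y i j) =
               (\<Sum>k<n. \<Sum>m<n. sK (\<alpha> i k * mat_inv n \<alpha> m j) (y k m)))
          \<longrightarrow> (\<forall>i<n. \<forall>j<n. f (y i j) = ring_inv D * S (S (y i j)) * D)
            \<and> f = (\<lambda>x. ring_inv D * S (S x) * D))
       \<and> surj S"
proof -
  have rD: "ring_inv D = S D" by (rule ring_inv_gl[OF D_gl])
  have etaf: "eta = (\<lambda>x. ring_inv D * S (S x) * D)" by (simp add: rD eta_def[abs_def])
  have uniq: "f = eta" if "hopf_endo sK \<Delta> \<epsilon> S f" "\<forall>i<n. \<forall>j<n. f (y i j) =
               (\<Sum>k<n. \<Sum>m<n. sK (\<alpha> i k * mat_inv n \<alpha> m j) (y k m))" for f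
    by (rule endo_unique[OF that(1) eta_endo]) (simp add: that(2) eta_y)
  show ?thesis
  proof (intro conjI)
    show "\<exists>!f. hopf_endo sK \<Delta> \<epsilon> S f \<and> (\<forall>i<n. \<forall>j<n. f (y i j) =
               (\<Sum>k<n. \<Sum>m<n. sK (\<alpha> i k * mat_inv n \<alpha> m j) (y k m)))"
      by (rule ex1I[where a=eta]) (auto simp: eta_endo eta_y uniq)
    show "\<forall>f. hopf_endo sK \<Delta> \<epsilon> S f \<and>
            (\<forall>i<n. \<forall>j<n. f (y i j) =
               (\<Sum>k<n. \<Sum>m<n. sK (\<alpha> i k * mat_inv n \<alpha> m j) (y k m)))
          \<longrightarrow> (\<forall>i<n. \<forall>j<n. f (y i j) = ring_inv D * S (S (y i j)) * D)
            \<and> f = (\<lambda>x. ring_inv D * S (S x) * D)"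
    proof (intro allI impI)
      fix f assume A: "hopf_endo sK \<Delta> \<epsilon> S f \<and>
            (\<forall>i<n. \<forall>j<n. f (y i j) =
               (\<Sum>k<n. \<Sum>m<n. sK (\<alpha> i k * mat_inv n \<alpha> m j) (y k m)))"
      then have fe: "f = eta" using uniq by blast
      show "(\<forall>i<n. \<forall>j<n. f (y i j) = ring_inv D * S (S (y i j)) * D) \<and> f = (\<lambda>x. ring_inv D * S (S x) * D)"
        using fe etaf by simp
    qed
    show "surj S" by (rule surj_S)
  qed
qed

end



theorem theorem3p2:
  fixes sK :: "'k::field \<Rightarrow> 'a::ring_1 \<Rightarrow> 'a"
    and \<Delta> :: "'a \<Rightarrow> ('a \<times> 'a) list" and \<epsilon> :: "'a \<Rightarrow> 'k" and S :: "'a \<Rightarrow> 'a"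
    and sE :: "'k \<Rightarrow> 'e::ring_1 \<Rightarrow> 'e" and Egr :: "nat \<Rightarrow> 'e set"
    and l :: nat and B :: "'e \<Rightarrow> 'e \<Rightarrow> 'k" and \<mu> :: "'e \<Rightarrow> 'e"
    and \<rho> :: "'e \<Rightarrow> ('a \<times> 'e) list"
    and fe :: 'e and D :: 'a
    and n :: nat and a :: "nat \<Rightarrow> 'e" and \<alpha> :: "nat \<Rightarrow> nat \<Rightarrow> 'k" and y :: "nat \<Rightarrow> nat \<Rightarrow> 'a"
  assumes K_hopf: "hopf_algebra sK \<Delta> \<epsilon> S"
    and E_cga: "connected_graded_algebra sE Egr"
    and E_frob: "graded_frobenius sE Egr l B"
    and mu_nak: "nakayama_aut sE Egr B \<mu>"
    and E_comod: "graded_comodule_algebra sK \<Delta> \<epsilon> sE Egr \<rho>"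
    and inner_faithful: "inner_faithful_E1 sK \<Delta> S sE Egr \<rho>"
    and fe_top: "fe \<in> Egr l" "fe \<noteq> 0"
    and codet: "teq2 sK sE (\<rho> fe) [(D, fe)]"
    and basis: "inj_on a {..<n}" "\<not> module.dependent sE (a ` {..<n})"
               "module.span sE (a ` {..<n}) = Egr 1"
    and alpha: "\<forall>i<n. \<mu> (a i) = (\<Sum>j<n. sE (\<alpha> i j) (a j))"
    and Ymat: "\<forall>i<n. teq2 sK sE (\<rho> (a i)) (map (\<lambda>s. (y i s, a s)) [0..<n])"
  shows "(\<exists>!f. hopf_endo sK \<Delta> \<epsilon> S f \<and>
            (\<forall>i<n. \<forall>j<n. f (y i j) =
               (\<Sum>k<n. \<Sum>m<n. sK (\<alpha> i k * mat_inv n \<alpha> m j) (y k m))))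
       \<and> (\<forall>f. hopf_endo sK \<Delta> \<epsilon> S f \<and>
            (\<forall>i<n. \<forall>j<n. f (y i j) =
               (\<Sum>k<n. \<Sum>m<n. sK (\<alpha> i k * mat_inv n \<alpha> m j) (y k m)))
          \<longrightarrow> (\<forall>i<n. \<forall>j<n. f (y i j) = ring_inv D * S (S (y i j)) * D)
            \<and> f = (\<lambda>x. ring_inv D * S (S x) * D))
       \<and> surj S"
proof -
  interpret c: ctx sK \<Delta> \<epsilon> S sE Egr l B \<mu> \<rho> fe D n a \<alpha> y
    using assms by (intro ctx.intro hopf.intro ctx_axioms.intro) assumption+
  show ?thesis by (rule c.main)
qed

end
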